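(* Let $d\ge 2$. Define $$\tilde h_1(z)=z_1^{Q}\cdots z_d^{Q}\prod_{n\in W}\Big(\sum_{j=1}^d\frac{1}{\rho^j_{n_j}z_j}\Big),\qquad \tilde h_2(z)=z_1^{Q}\cdots z_{d-1}^{Q}z_d^{-Q}\prod_{n\in W}\Big(\rho^d_{n_d}z_d+\sum_{j=1}^{d-1}\frac{1}{\rho^j_{n_j}z_j}\Big).$$ Then $\tilde h_1$ is a polynomial in $z_1,\dots,z_d$ and there is a polynomial $h_1$ with $\tilde h_1(z)=h_1(z_1^{q_1},\dots,z_d^{q_d})$; $\tilde h_2$ is a polynomial in $z_1,\dots,z_{d-1},z_d^{-1}$ and there is a polynomial $h_2(w_1,\dots,w_{d-1},w_d^{-1})$ in the variables $w_1,\dots,w_{d-1},w_d^{-1}$ with $\tilde h_2(z)=h_2(z_1^{q_1},\dots,z_d^{q_d})$. Both $h_1$ and $h_2$ are irreducible (as polynomials in their respective variables): neither can be written as a product of two non-constant polynomials.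
   Context: $q_1,\dots,q_d$ are positive integers with greatest common divisor $1$, $Q=q_1\cdots q_d$, $W=\{n=(n_1,\dots,n_d)\in\mathbb{Z}^d:0\le n_j\le q_j-1\}$, and $\rho^j_{n_j}=e^{2\pi i n_j/q_j}$. *)

theory Defs
  imports "HOL-Analysis.Analysis" "HOL-Library.Poly_Mapping" "HOL-Computational_Algebra.Factorial_Ring"
begin

text \<open>Variable j (j = 0,..,d-1) corresponds to the paper's variable number j+1.\<close>

type_synonym mpoly = "(nat \<Rightarrow>\<^sub>0 nat) \<Rightarrow>\<^sub>0 complex"

definition mpoly_eval :: "mpoly \<Rightarrow> (nat \<Rightarrow> complex) \<Rightarrow> complex" where
  "mpoly_eval p x = (\<Sum>m\<in>Poly_Mapping.keys p.
      Poly_Mapping.lookup p m * (\<Prod>i\<in>Poly_Mapping.keys m. x i ^ Poly_Mapping.lookup m i))"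

definition mpoly_vars_below :: "nat \<Rightarrow> mpoly \<Rightarrow> bool" where
  "mpoly_vars_below d p \<longleftrightarrow> (\<forall>m\<in>Poly_Mapping.keys p. Poly_Mapping.keys m \<subseteq> {..<d})"

definition rho :: "(nat \<Rightarrow> nat) \<Rightarrow> nat \<Rightarrow> nat \<Rightarrow> complex" where
  "rho q j k = exp (2 * pi * \<i> * of_nat k / of_nat (q j))"

definition Wset :: "nat \<Rightarrow> (nat \<Rightarrow> nat) \<Rightarrow> (nat \<Rightarrow> nat) set" where
  "Wset d q = PiE {..<d} (\<lambda>j. {..<q j})"

definition Qprod :: "nat \<Rightarrow> (nat \<Rightarrow> nat) \<Rightarrow> nat" where
  "Qprod d q = (\<Prod>j<d. q j)"

definition htilde1 :: "nat \<Rightarrow> (nat \<Rightarrow> nat) \<Rightarrow> (nat \<Rightarrow> complex) \<Rightarrow> complex" where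
  "htilde1 d q z = (\<Prod>j<d. z j ^ Qprod d q) *
     (\<Prod>n\<in>Wset d q. \<Sum>j<d. 1 / (rho q j (n j) * z j))"

definition htilde2 :: "nat \<Rightarrow> (nat \<Rightarrow> nat) \<Rightarrow> (nat \<Rightarrow> complex) \<Rightarrow> complex" where
  "htilde2 d q z = (\<Prod>j<d-1. z j ^ Qprod d q) / z (d-1) ^ Qprod d q *
     (\<Prod>n\<in>Wset d q. rho q (d-1) (n (d-1)) * z (d-1) + (\<Sum>j<d-1. 1 / (rho q j (n j) * z j)))"

end

theory Submission
  imports Defs
begin



type_synonym mono = "nat \<Rightarrow>\<^sub>0 nat"

lemma sum_when_eq: "finite K \<Longrightarrow> (\<Sum>m\<in>K. (f m when m = k)) = (if k \<in> K then f k else (0::'b::comm_monoid_add))"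
  by (simp add: when_def sum.delta)

lemma poly_expand: "(p :: 'a \<Rightarrow>\<^sub>0 'b::comm_monoid_add) = (\<Sum>m\<in>Poly_Mapping.keys p. Poly_Mapping.single m (Poly_Mapping.lookup p m))"
proof (rule poly_mapping_eqI)
  fix k
  have "Poly_Mapping.lookup (\<Sum>m\<in>Poly_Mapping.keys p. Poly_Mapping.single m (Poly_Mapping.lookup p m)) k
      = (\<Sum>m\<in>Poly_Mapping.keys p. (Poly_Mapping.lookup p m when m = k))"
    by (simp add: lookup_sum lookup_single when_def eq_commute)
  also have "\<dots> = Poly_Mapping.lookup p k"
    by (simp add: sum_when_eq in_keys_iff)
  finally show "Poly_Mapping.lookup p k = Poly_Mapping.lookup (\<Sum>m\<in>Poly_Mapping.keys p. Poly_Mapping.single m (Poly_Mapping.lookup p m)) k" by simp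
qed

definition cmap :: "(mono \<Rightarrow> mono) \<Rightarrow> (mono \<Rightarrow> complex) \<Rightarrow> mpoly \<Rightarrow> mpoly" where
  "cmap f g p = (\<Sum>m\<in>Poly_Mapping.keys p. Poly_Mapping.single (f m) (g m * Poly_Mapping.lookup p m))"

lemma cmap_superset:
  assumes "finite K" "Poly_Mapping.keys p \<subseteq> K"
  shows "cmap f g p = (\<Sum>m\<in>K. Poly_Mapping.single (f m) (g m * Poly_Mapping.lookup p m))"
  unfolding cmap_def
  by (rule sum.mono_neutral_left) (use assms in \<open>auto simp: in_keys_iff\<close>)

lemma cmap_zero [simp]: "cmap f g 0 = 0"
  by (simp add: cmap_def)

lemma cmap_add: "cmap f g (p + q) = cmap f g p + cmap f g q"
proof -
  let ?K = "Poly_Mapping.keys p \<union> Poly_Mapping.keys q"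
  have "Poly_Mapping.keys (p + q) \<subseteq> ?K" by (rule keys_add)
  then have "cmap f g (p + q) = (\<Sum>m\<in>?K. Poly_Mapping.single (f m) (g m * Poly_Mapping.lookup (p+q) m))"
    by (intro cmap_superset) auto
  also have "\<dots> = (\<Sum>m\<in>?K. Poly_Mapping.single (f m) (g m * Poly_Mapping.lookup p m)) +
                  (\<Sum>m\<in>?K. Poly_Mapping.single (f m) (g m * Poly_Mapping.lookup q m))"
    by (simp add: lookup_add distrib_left single_add sum.distrib)
  also have "\<dots> = cmap f g p + cmap f g q"
    using cmap_superset[of ?K p f g] cmap_superset[of ?K q f g] by simp
  finally show ?thesis .
qed

lemma cmap_single [simp]: "cmap f g (Poly_Mapping.single m c) = Poly_Mapping.single (f m) (g m * c)"
  by (cases "c = 0") (simp_all add: cmap_def)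

lemma cmap_sum: "cmap f g (\<Sum>i\<in>I. P i) = (\<Sum>i\<in>I. cmap f g (P i))"
  by (induction I rule: infinite_finite_induct) (simp_all add: cmap_add)

lemma mult_expand:
  "(a::mpoly) * b = (\<Sum>m\<in>Poly_Mapping.keys a. \<Sum>m'\<in>Poly_Mapping.keys b.
       Poly_Mapping.single (m + m') (Poly_Mapping.lookup a m * Poly_Mapping.lookup b m'))"
proof -
  have "a * b = (\<Sum>m\<in>Poly_Mapping.keys a. Poly_Mapping.single m (Poly_Mapping.lookup a m)) *
                (\<Sum>m\<in>Poly_Mapping.keys b. Poly_Mapping.single m (Poly_Mapping.lookup b m))"
    by (simp flip: poly_expand)
  also have "\<dots> = (\<Sum>m\<in>Poly_Mapping.keys a. \<Sum>m'\<in>Poly_Mapping.keys b.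
       Poly_Mapping.single (m + m') (Poly_Mapping.lookup a m * Poly_Mapping.lookup b m'))"
    by (simp add: sum_product mult_single)
  finally show ?thesis .
qed

lemma cmap_mult:
  assumes "\<And>m m'. m \<in> Poly_Mapping.keys a \<Longrightarrow> m' \<in> Poly_Mapping.keys b \<Longrightarrow>
              f3 (m + m') = f1 m + f2 m' \<and> g3 (m + m') = g1 m * g2 m'"
  shows "cmap f3 g3 (a * b) = cmap f1 g1 a * cmap f2 g2 b"
proof -
  have "cmap f3 g3 (a * b) = (\<Sum>m\<in>Poly_Mapping.keys a. \<Sum>m'\<in>Poly_Mapping.keys b.
       Poly_Mapping.single (f3 (m + m')) (g3 (m + m') * (Poly_Mapping.lookup a m * Poly_Mapping.lookup b m')))"
    by (subst mult_expand) (simp add: cmap_sum)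
  also have "\<dots> = (\<Sum>m\<in>Poly_Mapping.keys a. \<Sum>m'\<in>Poly_Mapping.keys b.
       Poly_Mapping.single (f1 m + f2 m') ((g1 m * Poly_Mapping.lookup a m) * (g2 m' * Poly_Mapping.lookup b m')))"
    by (intro sum.cong refl) (simp add: assms mult_ac)
  also have "\<dots> = cmap f1 g1 a * cmap f2 g2 b"
    by (simp add: cmap_def sum_product mult_single)
  finally show ?thesis .
qed

lemma lookup_cmap: "Poly_Mapping.lookup (cmap f g p) k =
   (\<Sum>m\<in>Poly_Mapping.keys p. (g m * Poly_Mapping.lookup p m when f m = k))"
  by (simp add: cmap_def lookup_sum lookup_single)

lemma lookup_cmap_inj:
  assumes "inj_on f (insert m (Poly_Mapping.keys p))"
  shows "Poly_Mapping.lookup (cmap f g p) (f m) = g m * Poly_Mapping.lookup p m"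
proof -
  have "Poly_Mapping.lookup (cmap f g p) (f m) =
      (\<Sum>m'\<in>Poly_Mapping.keys p. (g m' * Poly_Mapping.lookup p m' when m' = m))"
    unfolding lookup_cmap
    by (intro sum.cong refl) (use assms in \<open>auto simp: when_def inj_on_def\<close>)
  also have "\<dots> = g m * Poly_Mapping.lookup p m"
    by (simp add: sum_when_eq in_keys_iff)
  finally show ?thesis .
qed

lemma keys_cmap: "Poly_Mapping.keys (cmap f g p) \<subseteq> f ` Poly_Mapping.keys p"
proof
  fix k assume "k \<in> Poly_Mapping.keys (cmap f g p)"
  then have "Poly_Mapping.lookup (cmap f g p) k \<noteq> 0" by (simp add: in_keys_iff)
  then obtain m where "m \<in> Poly_Mapping.keys p" "f m = k"
    unfolding lookup_cmap by (metis (mono_tags, lifting) sum.neutral when_def)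
  then show "k \<in> f ` Poly_Mapping.keys p" by auto
qed

lemma cmap_cong:
  "(\<And>m. m \<in> Poly_Mapping.keys p \<Longrightarrow> f m = f' m \<and> g m = g' m) \<Longrightarrow> cmap f g p = cmap f' g' p"
  unfolding cmap_def by (intro sum.cong refl) auto

lemma cmap_id: "(\<And>m. m \<in> Poly_Mapping.keys p \<Longrightarrow> f m = m \<and> g m = 1) \<Longrightarrow> cmap f g p = p"
proof -
  assume "\<And>m. m \<in> Poly_Mapping.keys p \<Longrightarrow> f m = m \<and> g m = 1"
  then have "cmap f g p = cmap (\<lambda>m. m) (\<lambda>_. 1) p" by (intro cmap_cong) auto
  also have "\<dots> = p" by (simp add: cmap_def flip: poly_expand)
  finally show "cmap f g p = p" .
qed

lemma cmap_cmap: "cmap f1 g1 (cmap f2 g2 p) = cmap (\<lambda>m. f1 (f2 m)) (\<lambda>m. g1 (f2 m) * g2 m) p"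
  unfolding cmap_def[of f2] cmap_sum cmap_single
  by (simp add: cmap_def[of "\<lambda>m. f1 (f2 m)"] ac_simps)

lemma cmap_one: "g 0 = 1 \<Longrightarrow> f 0 = 0 \<Longrightarrow> cmap f g 1 = 1"
proof -
  assume "g 0 = 1" "f 0 = 0"
  have "cmap f g (Poly_Mapping.single 0 1) = Poly_Mapping.single (f 0) (g 0 * 1)" by (rule cmap_single)
  then show ?thesis using \<open>g 0 = 1\<close> \<open>f 0 = 0\<close> by simp
qed


definition mon :: "(nat \<Rightarrow> 'b::comm_monoid_mult) \<Rightarrow> mono \<Rightarrow> 'b" where
  "mon x m = (\<Prod>i\<in>Poly_Mapping.keys m. x i ^ Poly_Mapping.lookup m i)"

lemma mon_superset: "finite K \<Longrightarrow> Poly_Mapping.keys m \<subseteq> K \<Longrightarrow> mon x m = (\<Prod>i\<in>K. x i ^ Poly_Mapping.lookup m i)"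
  unfolding mon_def by (rule prod.mono_neutral_left) (auto simp: in_keys_iff)

lemma mon_zero [simp]: "mon x 0 = 1"
  by (simp add: mon_def)

lemma mon_add: "mon x (m + m') = mon x m * mon x m'"
proof -
  let ?K = "Poly_Mapping.keys m \<union> Poly_Mapping.keys m'"
  have "mon x (m + m') = (\<Prod>i\<in>?K. x i ^ Poly_Mapping.lookup (m + m') i)"
    by (rule mon_superset) (use keys_add[of m m'] in auto)
  also have "\<dots> = (\<Prod>i\<in>?K. x i ^ Poly_Mapping.lookup m i) * (\<Prod>i\<in>?K. x i ^ Poly_Mapping.lookup m' i)"
    by (simp add: lookup_add power_add prod.distrib)
  also have "\<dots> = mon x m * mon x m'"
    using mon_superset[of ?K m x] mon_superset[of ?K m' x] by simp
  finally show ?thesis .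
qed

definition ringhom :: "(complex \<Rightarrow> 'b::comm_ring_1) \<Rightarrow> bool" where
  "ringhom h \<longleftrightarrow> h 0 = 0 \<and> h 1 = 1 \<and> (\<forall>a b. h (a + b) = h a + h b) \<and> (\<forall>a b. h (a * b) = h a * h b)"

definition evh :: "(complex \<Rightarrow> 'b::comm_ring_1) \<Rightarrow> (nat \<Rightarrow> 'b) \<Rightarrow> mpoly \<Rightarrow> 'b" where
  "evh h x p = (\<Sum>m\<in>Poly_Mapping.keys p. h (Poly_Mapping.lookup p m) * mon x m)"

lemma ringhom_id: "ringhom (\<lambda>c. c)" by (simp add: ringhom_def)
lemma ringhom_const: "ringhom (\<lambda>c. Poly_Mapping.single 0 c :: mpoly)"
  by (simp add: ringhom_def single_add mult_single)

lemma mpoly_eval_evh: "mpoly_eval p x = evh (\<lambda>c. c) x p"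
  by (simp add: mpoly_eval_def evh_def mon_def)

lemma evh_superset: "ringhom h \<Longrightarrow> finite K \<Longrightarrow> Poly_Mapping.keys p \<subseteq> K \<Longrightarrow>
   evh h x p = (\<Sum>m\<in>K. h (Poly_Mapping.lookup p m) * mon x m)"
  unfolding evh_def by (rule sum.mono_neutral_left) (auto simp: in_keys_iff ringhom_def)

lemma evh_add: "ringhom h \<Longrightarrow> evh h x (p + q) = evh h x p + evh h x q"
proof -
  assume h: "ringhom h"
  let ?K = "Poly_Mapping.keys p \<union> Poly_Mapping.keys q"
  have "evh h x (p + q) = (\<Sum>m\<in>?K. h (Poly_Mapping.lookup (p + q) m) * mon x m)"
    by (rule evh_superset[OF h]) (use keys_add[of p q] in auto)
  also have "\<dots> = (\<Sum>m\<in>?K. h (Poly_Mapping.lookup p m) * mon x m) + (\<Sum>m\<in>?K. h (Poly_Mapping.lookup q m) * mon x m)"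
    using h by (simp add: lookup_add ringhom_def distrib_right sum.distrib)
  also have "\<dots> = evh h x p + evh h x q"
    using evh_superset[OF h, of ?K p x] evh_superset[OF h, of ?K q x] by simp
  finally show ?thesis .
qed

lemma evh_zero [simp]: "evh h x 0 = 0"
  by (simp add: evh_def)

lemma evh_single: "ringhom h \<Longrightarrow> evh h x (Poly_Mapping.single m c) = h c * mon x m"
  by (cases "c = 0") (simp_all add: evh_def ringhom_def)

lemma evh_sum: "ringhom h \<Longrightarrow> evh h x (\<Sum>i\<in>I. P i) = (\<Sum>i\<in>I. evh h x (P i))"
  by (induction I rule: infinite_finite_induct) (simp_all add: evh_add)

lemma evh_mult: "ringhom h \<Longrightarrow> evh h x (a * b) = evh h x a * evh h x b"
proof -
  assume h: "ringhom h"
  have "evh h x (a * b) = (\<Sum>m\<in>Poly_Mapping.keys a. \<Sum>m'\<in>Poly_Mapping.keys b.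
       h (Poly_Mapping.lookup a m * Poly_Mapping.lookup b m') * mon x (m + m'))"
    by (subst mult_expand) (simp add: evh_sum[OF h] evh_single[OF h])
  also have "\<dots> = (\<Sum>m\<in>Poly_Mapping.keys a. \<Sum>m'\<in>Poly_Mapping.keys b.
       (h (Poly_Mapping.lookup a m) * mon x m) * (h (Poly_Mapping.lookup b m') * mon x m'))"
    using h by (intro sum.cong refl) (simp add: ringhom_def mon_add ac_simps)
  also have "\<dots> = evh h x a * evh h x b"
    by (simp add: evh_def sum_product)
  finally show ?thesis .
qed

lemma evh_one: "ringhom h \<Longrightarrow> evh h x 1 = 1"
  using evh_single[of h x 0 1] by (simp add: ringhom_def)

lemma evh_prod: "ringhom h \<Longrightarrow> evh h x (\<Prod>i\<in>I. P i) = (\<Prod>i\<in>I. evh h x (P i))"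
  by (induction I rule: infinite_finite_induct) (simp_all add: evh_mult evh_one)

lemma evh_uminus: "ringhom h \<Longrightarrow> evh h x (- p) = - evh h x p"
  using minus_unique[of "evh h x p" "evh h x (-p)"] evh_add[of h x p "-p"] by simp

lemma evh_diff: "ringhom h \<Longrightarrow> evh h x (p - q) = evh h x p - evh h x q"
  using evh_add[of h x p "-q"] evh_uminus[of h x q] by simp

lemma evh_cmap: "ringhom h \<Longrightarrow> evh h x (cmap f g p) =
   (\<Sum>m\<in>Poly_Mapping.keys p. h (g m * Poly_Mapping.lookup p m) * mon x (f m))"
  by (simp add: cmap_def evh_sum evh_single)

definition Xv :: "nat \<Rightarrow> mpoly" where "Xv i = Poly_Mapping.single (Poly_Mapping.single i 1) 1"

lemma single_power: "(Poly_Mapping.single (Poly_Mapping.single i (Suc 0)) (1::complex)) ^ k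
    = Poly_Mapping.single (Poly_Mapping.single i k) 1"
  by (induction k) (simp_all add: mult_single flip: single_add)

lemma prod_single: "(\<Prod>i\<in>K. Poly_Mapping.single (t i) (1::complex)) = Poly_Mapping.single (\<Sum>i\<in>K. t i :: mono) 1"
  by (induction K rule: infinite_finite_induct) (simp_all add: mult_single)

lemma mon_Xv: "mon Xv m = Poly_Mapping.single m 1"
proof -
  have "mon Xv m = (\<Prod>i\<in>Poly_Mapping.keys m. Poly_Mapping.single (Poly_Mapping.single i (Poly_Mapping.lookup m i)) 1)"
    by (simp add: mon_def Xv_def single_power)
  also have "\<dots> = Poly_Mapping.single m 1"
    by (simp add: prod_single flip: poly_expand)
  finally show ?thesis .
qed

lemma evh_Xv: "evh (\<lambda>c. Poly_Mapping.single 0 c) Xv p = p"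
  by (simp add: evh_def mon_Xv mult_single) (simp flip: poly_expand)




lemma mono_ge0: "(0::mono) \<le> m"
proof -
  have "less_fun (\<lambda>_. 0) f \<or> (\<lambda>_. 0) = f" for f :: "nat \<Rightarrow> nat"
  proof (cases "f = (\<lambda>_. 0)")
    case False
    then have "\<exists>k. f k \<noteq> 0" by auto
    define k where "k = (LEAST k. f k \<noteq> 0)"
    have "f k \<noteq> 0" unfolding k_def by (rule LeastI_ex) fact
    moreover have "\<forall>k'<k. f k' = 0" unfolding k_def using not_less_Least by blast
    ultimately show ?thesis unfolding less_fun_def by (intro disjI1 exI[of _ k]) auto
  qed auto
  from this[of "Poly_Mapping.lookup m"] have "less_fun (\<lambda>_. 0) (Poly_Mapping.lookup m) \<or> m = 0"
    by (metis lookup_zero poly_mapping_eqI)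
  moreover have z: "Poly_Mapping.lookup (0::mono) = (\<lambda>_. 0)" by (rule ext) simp
  ultimately show ?thesis by (auto simp: less_eq_poly_mapping.rep_eq)
qed

lemma mono_le_lookup0: "(m::mono) \<le> M \<Longrightarrow> Poly_Mapping.lookup m 0 \<le> Poly_Mapping.lookup M 0"
proof -
  have "less_fun f g \<or> f = g \<Longrightarrow> f 0 \<le> g (0::nat)" for f g :: "nat \<Rightarrow> nat"
    unfolding less_fun_def by (metis bot_nat_0.not_eq_extremum order.refl order.strict_implies_order)
  then show "m \<le> M \<Longrightarrow> ?thesis" by (auto simp: less_eq_poly_mapping.rep_eq)
qed

definition lead :: "mpoly \<Rightarrow> mono" where "lead p = Max (Poly_Mapping.keys p)"

lemma lead_in: "p \<noteq> 0 \<Longrightarrow> lead p \<in> Poly_Mapping.keys p"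
  unfolding lead_def by (rule Max_in) auto

lemma lead_ge: "m \<in> Poly_Mapping.keys p \<Longrightarrow> m \<le> lead p"
  unfolding lead_def by (rule Max_ge) auto

lemma lead_mult_lookup:
  assumes "a \<noteq> 0" "b \<noteq> 0"
  shows "Poly_Mapping.lookup (a * b) (lead a + lead b) = Poly_Mapping.lookup a (lead a) * Poly_Mapping.lookup b (lead b)"
proof -
  have key: "m + m' = lead a + lead b \<longleftrightarrow> m = lead a \<and> m' = lead b"
    if "m \<in> Poly_Mapping.keys a" "m' \<in> Poly_Mapping.keys b" for m m'
  proof
    assume eq: "m + m' = lead a + lead b"
    have 1: "m \<le> lead a" "m' \<le> lead b" using that by (auto intro: lead_ge)
    show "m = lead a \<and> m' = lead b"
    proof (cases "m = lead a")
      case True then show ?thesis using eq by simp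
    next
      case False
      then have "m < lead a" using 1 by simp
      then have "m + m' < lead a + lead b" using 1 by (intro add_less_le_mono)
      then show ?thesis using eq by simp
    qed
  qed auto
  have "Poly_Mapping.lookup (a * b) (lead a + lead b) = (\<Sum>m\<in>Poly_Mapping.keys a. \<Sum>m'\<in>Poly_Mapping.keys b.
      (Poly_Mapping.lookup a m * Poly_Mapping.lookup b m' when m + m' = lead a + lead b))"
    by (subst mult_expand) (simp add: lookup_sum lookup_single)
  also have "\<dots> = (\<Sum>m\<in>Poly_Mapping.keys a. \<Sum>m'\<in>Poly_Mapping.keys b.
      ((Poly_Mapping.lookup a m * Poly_Mapping.lookup b m' when m' = lead b) when m = lead a))"
    by (intro sum.cong refl) (simp add: key when_def)
  also have "\<dots> = (\<Sum>m\<in>Poly_Mapping.keys a. (Poly_Mapping.lookup a (lead a) * Poly_Mapping.lookup b (lead b) when m = lead a))"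
    by (intro sum.cong refl, case_tac "x = lead a") (simp_all add: when_def sum.delta lead_in[OF assms(2)])
  also have "\<dots> = Poly_Mapping.lookup a (lead a) * Poly_Mapping.lookup b (lead b)"
    using lead_in[OF assms(1)] by (simp add: when_def sum.delta)
  finally show ?thesis .
qed

lemma lead_mult:
  assumes "a \<noteq> 0" "b \<noteq> 0"
  shows "lead (a * b) = lead a + lead b"
proof -
  have "Poly_Mapping.lookup (a * b) (lead a + lead b) \<noteq> 0"
    using lead_mult_lookup[OF assms] lead_in[OF assms(1)] lead_in[OF assms(2)] by (simp add: in_keys_iff)
  then have 1: "lead a + lead b \<in> Poly_Mapping.keys (a * b)" by (simp add: in_keys_iff)
  have 2: "k \<le> lead a + lead b" if "k \<in> Poly_Mapping.keys (a * b)" for k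
    using keys_mult[of a b] that by (auto intro!: add_mono lead_ge)
  show ?thesis unfolding lead_def[of "a*b"]
    by (rule Max_eqI) (use 1 2 in auto)
qed

lemma unit_const:
  assumes "(a::mpoly) * b = 1"
  shows "a = Poly_Mapping.single 0 (Poly_Mapping.lookup a 0) \<and> Poly_Mapping.lookup a 0 \<noteq> 0"
proof -
  have ab: "a \<noteq> 0" "b \<noteq> 0" using assms by auto
  have "lead (1::mpoly) = 0" unfolding lead_def by simp
  then have "lead a + lead b = 0" using lead_mult[OF ab] assms by simp
  moreover have "lead a \<le> lead a + lead b" by (rule add_increasing2[OF mono_ge0]) simp
  ultimately have "lead a = 0" using mono_ge0[of "lead a"] by simp
  then have K: "Poly_Mapping.keys a \<subseteq> {0}" using lead_ge[of _ a] mono_ge0 by (auto intro: antisym)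
  have "a = (\<Sum>m\<in>Poly_Mapping.keys a. Poly_Mapping.single m (Poly_Mapping.lookup a m))" by (rule poly_expand)
  also have "\<dots> = (\<Sum>m\<in>{0}. Poly_Mapping.single m (Poly_Mapping.lookup a m))"
    by (rule sum.mono_neutral_left) (use K in \<open>auto simp: in_keys_iff\<close>)
  finally have "a = Poly_Mapping.single 0 (Poly_Mapping.lookup a 0)" by simp
  moreover have "Poly_Mapping.lookup a 0 \<noteq> 0" using K ab(1) \<open>lead a = 0\<close> lead_in[of a] by (simp add: in_keys_iff)
  ultimately show ?thesis by simp
qed

lemma is_unit_iff_const: "(a::mpoly) dvd 1 \<longleftrightarrow> (\<exists>c. c \<noteq> 0 \<and> a = Poly_Mapping.single 0 c)"
proof
  assume "a dvd 1"
  then obtain b where "1 = a * b" by (rule dvdE)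
  then show "\<exists>c. c \<noteq> 0 \<and> a = Poly_Mapping.single 0 c" using unit_const[of a b] by metis
next
  assume "\<exists>c. c \<noteq> 0 \<and> a = Poly_Mapping.single 0 c"
  then obtain c where "c \<noteq> 0" "a = Poly_Mapping.single 0 c" by auto
  then have "a * Poly_Mapping.single 0 (1/c) = 1" by (simp add: mult_single)
  then show "a dvd 1" by (metis dvdI)
qed




definition tau :: "nat \<Rightarrow> nat \<Rightarrow> nat" where
  "tau i j = (if j = 0 then i else if j = i then 0 else j)"

lemma tau_tau [simp]: "tau i (tau i j) = j" by (simp add: tau_def)
lemma inj_tau: "inj (tau i)" by (metis injI tau_tau)

definition perm :: "nat \<Rightarrow> mono \<Rightarrow> mono" where "perm i m = Poly_Mapping.map_key (tau i) m"

lemma lookup_perm: "Poly_Mapping.lookup (perm i m) k = Poly_Mapping.lookup m (tau i k)"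
  by (simp add: perm_def map_key.rep_eq[OF inj_tau])

lemma perm_perm [simp]: "perm i (perm i m) = m"
  by (rule poly_mapping_eqI) (simp add: lookup_perm)

lemma inj_perm: "inj (perm i)" by (metis injI perm_perm)

lemma perm_add: "perm i (m + m') = perm i m + perm i m'"
  by (simp add: perm_def map_key_plus[OF inj_tau])

definition swp :: "nat \<Rightarrow> mpoly \<Rightarrow> mpoly" where "swp i p = cmap (perm i) (\<lambda>_. 1) p"

lemma swp_mult: "swp i (a * b) = swp i a * swp i b"
  unfolding swp_def by (rule cmap_mult) (simp add: perm_add)

lemma keys_cmap_inj: "inj_on f (Poly_Mapping.keys p) \<Longrightarrow> Poly_Mapping.keys (cmap f (\<lambda>_. 1) p) = f ` Poly_Mapping.keys p"
proof
  assume inj: "inj_on f (Poly_Mapping.keys p)"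
  show "f ` Poly_Mapping.keys p \<subseteq> Poly_Mapping.keys (cmap f (\<lambda>_. 1) p)"
  proof
    fix k assume "k \<in> f ` Poly_Mapping.keys p"
    then obtain m where m: "m \<in> Poly_Mapping.keys p" "k = f m" by auto
    have "Poly_Mapping.lookup (cmap f (\<lambda>_. 1) p) (f m) = 1 * Poly_Mapping.lookup p m"
      by (rule lookup_cmap_inj) (use inj m in \<open>simp add: insert_absorb\<close>)
    then show "k \<in> Poly_Mapping.keys (cmap f (\<lambda>_. 1) p)" using m by (simp add: in_keys_iff)
  qed
qed (rule keys_cmap)

lemma keys_swp: "Poly_Mapping.keys (swp i p) = perm i ` Poly_Mapping.keys p"
  unfolding swp_def by (rule keys_cmap_inj) (meson inj_perm inj_on_subset subset_UNIV)

definition deg :: "nat \<Rightarrow> mpoly \<Rightarrow> nat" where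
  "deg i p = Max ((\<lambda>m. Poly_Mapping.lookup m i) ` Poly_Mapping.keys p)"

lemma deg_ge: "m \<in> Poly_Mapping.keys p \<Longrightarrow> Poly_Mapping.lookup m i \<le> deg i p"
  unfolding deg_def by (rule Max_ge) auto

lemma deg_in: "p \<noteq> 0 \<Longrightarrow> \<exists>m\<in>Poly_Mapping.keys p. Poly_Mapping.lookup m i = deg i p"
proof -
  assume "p \<noteq> 0"
  then have "deg i p \<in> (\<lambda>m. Poly_Mapping.lookup m i) ` Poly_Mapping.keys p"
    unfolding deg_def by (intro Max_in) auto
  then show ?thesis by auto
qed

lemma deg_lead: assumes "p \<noteq> 0" shows "deg i p = Poly_Mapping.lookup (lead (swp i p)) 0"
proof -
  have sp: "swp i p \<noteq> 0" using assms keys_swp[of i p] by auto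
  have "lead (swp i p) \<in> perm i ` Poly_Mapping.keys p" using lead_in[OF sp] keys_swp by auto
  then obtain m0 where m0: "m0 \<in> Poly_Mapping.keys p" "lead (swp i p) = perm i m0" by auto
  have le: "Poly_Mapping.lookup m i \<le> Poly_Mapping.lookup m0 i" if "m \<in> Poly_Mapping.keys p" for m
  proof -
    have "perm i m \<le> lead (swp i p)" using that keys_swp by (intro lead_ge) auto
    then have "Poly_Mapping.lookup (perm i m) 0 \<le> Poly_Mapping.lookup (lead (swp i p)) 0" by (rule mono_le_lookup0)
    then show ?thesis using m0 by (simp add: lookup_perm tau_def)
  qed
  have "deg i p = Poly_Mapping.lookup m0 i" unfolding deg_def
    by (rule Max_eqI) (use m0 le in auto)
  then show ?thesis using m0 by (simp add: lookup_perm tau_def)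
qed

lemma deg_mult: assumes "a \<noteq> 0" "b \<noteq> 0" shows "deg i (a * b) = deg i a + deg i b"
proof -
  have sa: "swp i a \<noteq> 0" using assms keys_swp[of i a] by auto
  have sb: "swp i b \<noteq> 0" using assms keys_swp[of i b] by auto
  have "a * b \<noteq> 0" using assms by simp
  then show ?thesis
    using deg_lead[OF assms(1)] deg_lead[OF assms(2)] deg_lead[of "a*b"] lead_mult[OF sa sb]
    by (simp add: swp_mult lookup_add)
qed

section \<open>Primality of linear forms\<close>

definition Const :: "complex \<Rightarrow> mpoly" where "Const c = Poly_Mapping.single 0 c"

lemma dvd_pow_diff: "(l::'a::comm_ring_1) dvd x - y \<Longrightarrow> l dvd x ^ k - y ^ k"
proof (induction k)
  case (Suc k)
  have "x ^ Suc k - y ^ Suc k = x * (x ^ k - y ^ k) + (x - y) * y ^ k" by (simp add: algebra_simps)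
  then show ?case using Suc by (metis dvd_add dvd_mult dvd_mult2)
qed simp

lemma dvd_prod_diff: "(\<And>i. i \<in> K \<Longrightarrow> (l::'a::comm_ring_1) dvd f i - g i) \<Longrightarrow> l dvd (\<Prod>i\<in>K. f i) - (\<Prod>i\<in>K. g i)"
proof (induction K rule: infinite_finite_induct)
  case (insert i K)
  have "(\<Prod>i\<in>insert i K. f i) - (\<Prod>i\<in>insert i K. g i) =
        f i * ((\<Prod>i\<in>K. f i) - (\<Prod>i\<in>K. g i)) + (f i - g i) * (\<Prod>i\<in>K. g i)"
    using insert by (simp add: algebra_simps)
  then show ?case using insert by (metis dvd_add dvd_mult dvd_mult2 insertI1 insertI2)
qed simp_all

lemma evh_cong:
  assumes "\<And>i. l dvd x i - y i"
  shows "l dvd evh Const x p - evh Const y p"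
proof -
  have "evh Const x p - evh Const y p = (\<Sum>m\<in>Poly_Mapping.keys p. Const (Poly_Mapping.lookup p m) * (mon x m - mon y m))"
    by (simp add: evh_def sum_subtractf right_diff_distrib)
  also have "l dvd \<dots>"
    unfolding mon_def
    by (intro dvd_sum dvd_mult dvd_prod_diff dvd_pow_diff assms)
  finally show ?thesis .
qed

lemma ringhom_Const: "ringhom Const"
  unfolding Const_def by (rule ringhom_const)

definition linf :: "nat \<Rightarrow> (nat \<Rightarrow> complex) \<Rightarrow> mpoly" where
  "linf d c = (\<Sum>j<d. Poly_Mapping.single (Poly_Mapping.single j 1) (c j))"

lemma sum_split0: "0 < (d::nat) \<Longrightarrow> (\<Sum>j<d. f j) = f 0 + (\<Sum>j\<in>{1..<d}. f j)"
  using sum.atLeast_Suc_lessThan[of 0 d f] by (simp add: atLeast0LessThan)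

lemma mon_single1: "mon x (Poly_Mapping.single j (Suc 0)) = x j"
  by (simp add: mon_def)

lemma linf_prime:
  assumes d: "d \<ge> 1" and c0: "c 0 \<noteq> 0" and dv: "linf d c dvd a * b"
  shows "linf d c dvd a \<or> linf d c dvd b"
proof -
  define l where "l = linf d c"
  define R where "R = (\<Sum>j\<in>{1..<d}. Poly_Mapping.single (Poly_Mapping.single j (Suc 0)) (c j / c 0) :: mpoly)"
  define y where "y j = (if j = 0 then - R else Xv j)" for j
  have l_split: "l = Poly_Mapping.single (Poly_Mapping.single 0 (Suc 0)) (c 0) + Const (c 0) * R"
    unfolding l_def linf_def R_def using d c0
    by (simp add: sum_split0 Const_def sum_distrib_left mult_single)
  have cong: "l dvd Xv j - y j" for j
  proof (cases "j = 0")
    case True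
    have "Xv 0 - y 0 = Const (1 / c 0) * l"
      using c0 by (simp add: True y_def Xv_def l_split Const_def mult_single distrib_left flip: mult.assoc)
    then show ?thesis using True by simp
  qed (simp add: y_def)
  have phi_l: "evh Const y l = 0"
  proof -
    have "evh Const y l = (\<Sum>j<d. Const (c j) * y j)"
      unfolding l_def linf_def by (simp add: evh_sum ringhom_Const evh_single mon_single1)
    also have "\<dots> = Const (c 0) * (- R) + (\<Sum>j\<in>{1..<d}. Const (c j) * Xv j)"
      using d by (simp add: sum_split0 y_def)
    also have "\<dots> = 0"
      using c0 by (simp add: R_def Const_def Xv_def sum_distrib_left mult_single)
    finally show ?thesis .
  qed
  have char: "l dvd p \<longleftrightarrow> evh Const y p = 0" for p
  proof
    assume "l dvd p"
    then obtain k where "p = l * k" by (rule dvdE)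
    then show "evh Const y p = 0" by (simp add: evh_mult ringhom_Const phi_l)
  next
    assume "evh Const y p = 0"
    moreover have "l dvd evh Const Xv p - evh Const y p" by (rule evh_cong[OF cong])
    moreover have "evh Const Xv p = p" unfolding Const_def by (rule evh_Xv)
    ultimately show "l dvd p" by simp
  qed
  have "evh Const y (a * b) = 0" using dv char l_def by simp
  then have "evh Const y a = 0 \<or> evh Const y b = 0" by (simp add: evh_mult ringhom_Const)
  then show ?thesis using char l_def by auto
qed




lemma rho_nz [simp]: "rho q j k \<noteq> 0" by (simp add: rho_def)

lemma rho_mult: "rho q j k * rho q j l = rho q j (k + l)"
  by (simp add: rho_def mult_exp_exp add_divide_distrib distrib_left distrib_right)

lemma rho_pow: "rho q j k ^ t = rho q j (k * t)"
proof (induction t)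
  case 0 show ?case by (simp add: rho_def)
next
  case (Suc t) then show ?case by (simp add: rho_mult)
qed

lemma rho_one_iff:
  assumes "q j > 0"
  shows "rho q j k = 1 \<longleftrightarrow> q j dvd k"
proof -
  have "rho q j k = 1 \<longleftrightarrow> (\<exists>n::int. 2 * pi * real k / real (q j) = of_int (2 * n) * pi)"
    unfolding rho_def exp_eq_1 by simp
  also have "\<dots> \<longleftrightarrow> (\<exists>n::int. real k = real (q j) * of_int n)"
    using assms by (intro ex_cong1) (auto simp: field_simps)
  also have "\<dots> \<longleftrightarrow> (\<exists>n::int. int k = int (q j) * n)"
    by (intro ex_cong1) (metis of_int_eq_iff of_int_mult of_int_of_nat_eq)
  also have "\<dots> \<longleftrightarrow> int (q j) dvd int k" by (auto simp: dvd_def)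
  also have "\<dots> \<longleftrightarrow> q j dvd k" by simp
  finally show ?thesis .
qed

lemma rho_mod: "q j > 0 \<Longrightarrow> rho q j (k mod q j) = rho q j k"
proof -
  assume qp: "q j > 0"
  have "rho q j k = rho q j (k mod q j + q j * (k div q j))" by simp
  also have "\<dots> = rho q j (k mod q j) * rho q j (q j * (k div q j))" by (simp add: rho_mult)
  also have "rho q j (q j * (k div q j)) = 1" using qp by (simp add: rho_one_iff)
  finally show ?thesis by simp
qed

lemma rho_inj:
  assumes "q j > 0" "k < q j" "l < q j" "rho q j k = rho q j l"
  shows "k = l"
proof -
  have "rho q j (k + (q j - l)) = rho q j l * rho q j (q j - l)" by (simp add: rho_mult[symmetric] assms(4))
  also have "\<dots> = 1" using assms by (simp add: rho_mult rho_one_iff)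
  finally have dv: "q j dvd k + (q j - l)" using assms(1) rho_one_iff by blast
  show ?thesis
  proof (cases "l \<le> k")
    case True
    then have "k + (q j - l) = q j + (k - l)" using assms by simp
    then have "q j dvd k - l" using dv by (simp add: dvd_add_right_iff)
    then show ?thesis using True assms(2) by (metis diff_is_0_eq' dvd_imp_le le_antisym less_imp_diff_less not_less zero_less_diff)
  next
    case False
    then have "0 < k + (q j - l)" "k + (q j - l) < q j" using assms by auto
    then show ?thesis using dv by (meson nat_dvd_not_less)
  qed
qed

lemma pow_gcd_one:
  fixes c :: complex
  assumes "finite A" "\<And>a. a \<in> A \<Longrightarrow> c ^ a = 1"
  shows "c ^ Gcd A = 1"
  using assms
proof (induction A rule: finite_induct)
  case (insert a A)
  then have ca: "c ^ a = 1" and cg: "c ^ Gcd A = 1" by auto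
  show ?case
  proof (cases "a = 0")
    case True then show ?thesis using cg by (simp add: Gcd_insert)
  next
    case False
    then obtain x y where xy: "a * x = Gcd A * y + gcd a (Gcd A)" using bezout_nat by blast
    have "1 = (c ^ a) ^ x" using ca by simp
    also have "\<dots> = c ^ (Gcd A * y) * c ^ gcd a (Gcd A)" by (simp add: power_mult[symmetric] xy power_add)
    also have "\<dots> = c ^ gcd a (Gcd A)" using cg by (simp add: power_mult)
    finally show ?thesis by (simp add: Gcd_insert)
  qed
qed simp




lemma lookup_Const_mult: "Poly_Mapping.lookup (Const c * p) m = c * Poly_Mapping.lookup p m"
proof (cases "c = 0")
  case False
  have "Const c * p = (\<Sum>m'\<in>Poly_Mapping.keys p. Poly_Mapping.single m' (c * Poly_Mapping.lookup p m'))"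
    using False by (subst mult_expand) (simp add: Const_def)
  also have "Poly_Mapping.lookup \<dots> m = c * Poly_Mapping.lookup p m"
    by (simp add: lookup_sum lookup_single when_def sum.delta in_keys_iff)
  finally show ?thesis .
qed (simp add: Const_def)

lemma single1_eq [simp]: "Poly_Mapping.single a (Suc 0) = Poly_Mapping.single b (Suc 0) \<longleftrightarrow> a = b"
proof
  assume "Poly_Mapping.single a (Suc 0) = Poly_Mapping.single b (Suc 0)"
  then have "Poly_Mapping.lookup (Poly_Mapping.single a (Suc 0)) a = Poly_Mapping.lookup (Poly_Mapping.single b (Suc 0)) a" by simp
  then show "a = b" by (simp add: lookup_single when_def split: if_splits)
qed simp

lemma Const_mult [simp]: "Const a * Const b = Const (a * b)"
  by (simp add: Const_def mult_single)

lemma Const_one [simp]: "Const 1 = 1" by (simp add: Const_def)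

lemma const_of_deg0:
  assumes "p \<noteq> 0" "\<And>i. deg i p = 0"
  shows "p = Const (Poly_Mapping.lookup p 0) \<and> Poly_Mapping.lookup p 0 \<noteq> 0"
proof -
  have K: "Poly_Mapping.keys p \<subseteq> {0}"
  proof
    fix m assume "m \<in> Poly_Mapping.keys p"
    then have "Poly_Mapping.lookup m i = 0" for i using deg_ge[of m p i] assms(2)[of i] by simp
    then have "m = 0" by (intro poly_mapping_eqI) simp
    then show "m \<in> {0}" by simp
  qed
  have "p = (\<Sum>m\<in>Poly_Mapping.keys p. Poly_Mapping.single m (Poly_Mapping.lookup p m))" by (rule poly_expand)
  also have "\<dots> = (\<Sum>m\<in>{0}. Poly_Mapping.single m (Poly_Mapping.lookup p m))"
    by (rule sum.mono_neutral_left) (use K in \<open>auto simp: in_keys_iff\<close>)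
  finally have "p = Const (Poly_Mapping.lookup p 0)" by (simp add: Const_def)
  moreover have "Poly_Mapping.lookup p 0 \<noteq> 0" using K assms(1) by (metis calculation Const_def single_zero)
  ultimately show ?thesis by simp
qed

locale Setup =
  fixes d :: nat and q :: "nat \<Rightarrow> nat"
  assumes d2: "d \<ge> 2" and qpos: "\<forall>j<d. q j > 0" and gcd1: "Gcd (q ` {..<d}) = 1"
begin

abbreviation W where "W \<equiv> Wset d q"

definition lin :: "(nat \<Rightarrow> nat) \<Rightarrow> mpoly" where "lin n = linf d (\<lambda>j. inverse (rho q j (n j)))"

lemma finite_W: "finite W" unfolding Wset_def by (rule finite_PiE) auto

lemma lookup_lin_gen: "Poly_Mapping.lookup (lin n) k = (\<Sum>j<d. (inverse (rho q j (n j)) when Poly_Mapping.single j 1 = k))"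
  by (simp add: lin_def linf_def lookup_sum lookup_single)

lemma lookup_lin: "j < d \<Longrightarrow> Poly_Mapping.lookup (lin n) (Poly_Mapping.single j (Suc 0)) = inverse (rho q j (n j))"
  unfolding lookup_lin_gen by (simp add: when_def sum.delta)

lemma keys_lin: "Poly_Mapping.keys (lin n) \<subseteq> {Poly_Mapping.single j (Suc 0) | j. j < d}"
proof
  fix k assume "k \<in> Poly_Mapping.keys (lin n)"
  then have "Poly_Mapping.lookup (lin n) k \<noteq> 0" by (simp add: in_keys_iff)
  then obtain j where "j < d" "Poly_Mapping.single j 1 = k" unfolding lookup_lin_gen
    by (metis (mono_tags, lifting) lessThan_iff sum.neutral when_def)
  then show "k \<in> {Poly_Mapping.single j (Suc 0) | j. j < d}" by auto
qed

lemma lin_key: "j < d \<Longrightarrow> Poly_Mapping.single j (Suc 0) \<in> Poly_Mapping.keys (lin n)"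
  by (simp add: in_keys_iff lookup_lin)

lemma lin_nz: "lin n \<noteq> 0" using lin_key[of 0 n] d2 by auto

lemma lin_prime: "lin n dvd a * b \<Longrightarrow> lin n dvd a \<or> lin n dvd b"
  unfolding lin_def by (rule linf_prime) (use d2 in auto)

lemma deg_lin: "deg i (lin n) = (if i < d then 1 else 0)"
proof -
  have le: "Poly_Mapping.lookup k i \<le> (if i < d then 1 else 0)" if kk: "k \<in> Poly_Mapping.keys (lin n)" for k
  proof -
    obtain j where "k = Poly_Mapping.single j (Suc 0)" "j < d" using keys_lin kk by blast
    then show ?thesis by (auto simp: lookup_single when_def)
  qed
  show ?thesis
  proof (cases "i < d")
    case True
    then show ?thesis unfolding deg_def
      by (intro Max_eqI) (use le lin_key[OF True, of n] in force)+
  next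
    case False
    then show ?thesis unfolding deg_def
      using le lin_key[of 0 n] d2 by (intro Max_eqI) force+
  qed
qed

lemma lin_not_unit: "\<not> lin n dvd 1"
proof
  assume "lin n dvd 1"
  then obtain c where "lin n = Poly_Mapping.single 0 c" using is_unit_iff_const by blast
  then have "deg 0 (lin n) = 0" using deg_ge[of _ "lin n" 0] lin_nz[of n] unfolding deg_def
    by (cases "c = 0") auto
  then show False using deg_lin[of 0 n] d2 by simp
qed

lemma lin_dvd_lin:
  assumes n: "n \<in> W" and m: "m \<in> W" and dv: "lin n dvd lin m"
  shows "n = m"
proof -
  obtain k where k: "lin m = lin n * k" using dv by (rule dvdE)
  have knz: "k \<noteq> 0" using k lin_nz by auto
  have "deg i k = 0" for i using deg_mult[OF lin_nz[of n] knz, of i] k deg_lin[of i m] deg_lin[of i n] by simp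
  then obtain c where kc: "k = Const c" and cnz: "c \<noteq> 0" using const_of_deg0[OF knz] by blast
  have eqj: "inverse (rho q j (m j)) = c * inverse (rho q j (n j))" if "j < d" for j
    using arg_cong[OF k, of "\<lambda>p. Poly_Mapping.lookup p (Poly_Mapping.single j 1)"] that
    by (simp add: kc mult.commute[of _ "Const c"] lookup_Const_mult lookup_lin)
  have cpow: "c ^ a = 1" if aa: "a \<in> q ` {..<d}" for a
  proof -
    obtain j where j: "j < d" "a = q j" using aa by auto
    have qj: "q j > 0" using qpos j by auto
    have "c = rho q j (n j) * inverse (rho q j (m j))" using eqj[OF j(1)] by (simp add: field_simps)
    then have "c ^ a = rho q j (n j * q j) * inverse (rho q j (m j * q j))"
      by (simp add: j power_mult_distrib rho_pow power_inverse)
    also have "\<dots> = 1"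
      using rho_one_iff[of q j "n j * q j", OF qj] rho_one_iff[of q j "m j * q j", OF qj] by simp
    finally show ?thesis .
  qed
  have "c ^ Gcd (q ` {..<d}) = 1" by (rule pow_gcd_one) (use cpow in auto)
  then have c1: "c = 1" using gcd1 by simp
  show ?thesis
  proof (rule PiE_ext)
    show "n \<in> PiE {..<d} (\<lambda>j. {..<q j})" "m \<in> PiE {..<d} (\<lambda>j. {..<q j})" using n m by (simp_all add: Wset_def)
    fix j assume "j \<in> {..<d}"
    then have j: "j < d" by simp
    have "rho q j (m j) = rho q j (n j)" using eqj[OF j] c1 by simp
    moreover have "n j < q j" "m j < q j" using n m j by (auto simp: Wset_def PiE_iff)
    ultimately show "n j = m j" using rho_inj[of q j] qpos j by metis
  qed
qed

lemma prime_prod: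
  assumes "finite T" "lin n dvd (\<Prod>m\<in>T. lin m)"
  shows "\<exists>m\<in>T. lin n dvd lin m"
  using assms
proof (induction T rule: finite_induct)
  case empty then show ?case using lin_not_unit by simp
next
  case (insert t T)
  then have "lin n dvd lin t * (\<Prod>m\<in>T. lin m)" by simp
  then show ?case using insert lin_prime by blast
qed

lemma factor:
  assumes "finite T" "x * y = (\<Prod>n\<in>T. lin n)"
  shows "\<exists>S\<subseteq>T. \<exists>c. c \<noteq> 0 \<and> x = Const c * (\<Prod>n\<in>S. lin n)"
  using assms
proof (induction T arbitrary: x y rule: finite_induct)
  case empty
  then have "x * y = 1" by simp
  then show ?case using unit_const[of x y] by (auto simp: Const_def)
next
  case (insert t T)
  then have "lin t dvd x * y" by simp
  then consider "lin t dvd x" | "lin t dvd y" using lin_prime by blast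
  then show ?case
  proof cases
    case 1
    then obtain x' where x': "x = lin t * x'" by (rule dvdE)
    have "lin t * (x' * y) = lin t * (\<Prod>n\<in>T. lin n)" using insert x' by (simp add: mult.assoc)
    then have "x' * y = (\<Prod>n\<in>T. lin n)" using lin_nz by simp
    then obtain S c where "S \<subseteq> T" "c \<noteq> 0" "x' = Const c * (\<Prod>n\<in>S. lin n)" using insert by blast
    moreover have "t \<notin> S" using \<open>S \<subseteq> T\<close> insert by auto
    moreover have "finite S" using \<open>S \<subseteq> T\<close> insert finite_subset by blast
    ultimately show ?thesis using x'
      by (intro exI[of _ "insert t S"] exI[of _ c]) (auto simp: mult_ac)
  next
    case 2
    then obtain y' where y': "y = lin t * y'" by (rule dvdE)
    have "lin t * (x * y') = lin t * (\<Prod>n\<in>T. lin n)" using insert y' by (simp add: mult_ac)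
    then have "x * y' = (\<Prod>n\<in>T. lin n)" using lin_nz by simp
    then obtain S c where "S \<subseteq> T" "c \<noteq> 0" "x = Const c * (\<Prod>n\<in>S. lin n)" using insert by blast
    then show ?thesis by blast
  qed
qed

lemma unique_sub:
  assumes "S \<subseteq> W" "S' \<subseteq> W" "c' \<noteq> 0"
    and eq: "Const c * (\<Prod>n\<in>S. lin n) = Const c' * (\<Prod>n\<in>S'. lin n)"
  shows "S \<subseteq> S'"
proof
  fix n assume n: "n \<in> S"
  have fS: "finite S" "finite S'" using assms finite_W finite_subset by blast+
  have "lin n dvd Const c * (\<Prod>n\<in>S. lin n)" using n fS by (intro dvd_mult) (simp add: dvd_prodI)
  then have "lin n dvd Const (1 / c') * (Const c' * (\<Prod>n\<in>S'. lin n))" using eq by (simp add: dvd_mult)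
  then have "lin n dvd (\<Prod>n\<in>S'. lin n)" using assms(3) by (simp flip: mult.assoc)
  then obtain m where "m \<in> S'" "lin n dvd lin m" using prime_prod fS by blast
  then have "n = m" using lin_dvd_lin n assms by blast
  then show "n \<in> S'" using \<open>m \<in> S'\<close> by simp
qed

end



lemma mod_succ_pred: "k < (Q::nat) \<Longrightarrow> (Suc k mod Q + (Q - Suc 0)) mod Q = k"
proof -
  assume k: "k < Q"
  have "(Suc k mod Q + (Q - Suc 0)) mod Q = (Suc k + (Q - Suc 0)) mod Q" by (simp add: mod_add_left_eq)
  also have "Suc k + (Q - Suc 0) = k + Q" using k by simp
  finally show ?thesis using k by simp
qed

lemma mod_pred_succ: "k < (Q::nat) \<Longrightarrow> Suc ((k + (Q - Suc 0)) mod Q) mod Q = k"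
proof -
  assume k: "k < Q"
  have "Suc ((k + (Q - Suc 0)) mod Q) mod Q = Suc (k + (Q - Suc 0)) mod Q" by (simp add: mod_Suc_eq)
  also have "Suc (k + (Q - Suc 0)) = k + Q" using k by simp
  finally show ?thesis using k by simp
qed

context Setup begin

definition G :: mpoly where "G = (\<Prod>n\<in>W. lin n)"

definition sig :: "nat \<Rightarrow> mpoly \<Rightarrow> mpoly" where
  "sig i p = cmap (\<lambda>m. m) (\<lambda>m. inverse (rho q i 1) ^ Poly_Mapping.lookup m i) p"

definition shift :: "nat \<Rightarrow> (nat \<Rightarrow> nat) \<Rightarrow> (nat \<Rightarrow> nat)" where
  "shift i n = n(i := (n i + 1) mod q i)"

lemma sig_mult: "sig i (a * b) = sig i a * sig i b"
  unfolding sig_def by (rule cmap_mult) (simp add: lookup_add power_add)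

lemma sig_Const: "sig i (Const c) = Const c"
  by (simp add: sig_def Const_def)

lemma sig_one: "sig i 1 = 1"
  unfolding sig_def by (rule cmap_one) simp_all

lemma sig_prod: "sig i (\<Prod>n\<in>T. P n) = (\<Prod>n\<in>T. sig i (P n))"
  by (induction T rule: infinite_finite_induct) (simp_all add: sig_one sig_mult)

lemma W_mem: "n \<in> W \<Longrightarrow> j < d \<Longrightarrow> n j < q j"
  by (auto simp: Wset_def PiE_iff)

lemma sig_lin:
  assumes i: "i < d" and n: "n \<in> W"
  shows "sig i (lin n) = lin (shift i n)"
proof -
  have qi: "q i > 0" using qpos i by auto
  have "sig i (lin n) = (\<Sum>j<d. Poly_Mapping.single (Poly_Mapping.single j 1)
        (inverse (rho q i 1) ^ Poly_Mapping.lookup (Poly_Mapping.single j 1) i * inverse (rho q j (n j))))"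
    by (simp add: sig_def lin_def linf_def cmap_sum)
  also have "\<dots> = (\<Sum>j<d. Poly_Mapping.single (Poly_Mapping.single j 1) (inverse (rho q j (shift i n j))))"
  proof (intro sum.cong refl arg_cong[where f="Poly_Mapping.single _"])
    fix j assume "j \<in> {..<d}"
    show "inverse (rho q i 1) ^ Poly_Mapping.lookup (Poly_Mapping.single j 1) i * inverse (rho q j (n j)) =
          inverse (rho q j (shift i n j))"
    proof (cases "j = i")
      case True
      have r: "rho q i 1 * rho q i (n i) = rho q i (n i + 1)" by (simp add: rho_mult)
      have "inverse (rho q i 1) * inverse (rho q i (n i)) = inverse (rho q i (n i + 1))"
        using r by (metis inverse_mult_distrib)
      also have "\<dots> = inverse (rho q i ((n i + 1) mod q i))" using rho_mod[of q i, OF qi] by simp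
      finally show ?thesis using True by (simp add: shift_def lookup_single)
    qed (simp add: shift_def lookup_single when_def)
  qed
  also have "\<dots> = lin (shift i n)" by (simp add: lin_def linf_def)
  finally show ?thesis .
qed

lemma shift_bij: assumes i: "i < d" shows "bij_betw (shift i) W W"
proof (rule bij_betw_byWitness[where f' = "\<lambda>n. n(i := (n i + (q i - 1)) mod q i)"])
  have qi: "q i > 0" using qpos i by auto
  show "\<forall>a\<in>W. (shift i a)(i := (shift i a i + (q i - 1)) mod q i) = a"
  proof
    fix a assume a: "a \<in> W"
    have "(Suc (a i) mod q i + (q i - Suc 0)) mod q i = a i" by (rule mod_succ_pred[OF W_mem[OF a i]])
    then show "(shift i a)(i := (shift i a i + (q i - 1)) mod q i) = a" by (simp add: shift_def)
  qed
  show "\<forall>a\<in>W. shift i (a(i := (a i + (q i - 1)) mod q i)) = a"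
  proof
    fix a assume a: "a \<in> W"
    have "Suc ((a i + (q i - Suc 0)) mod q i) mod q i = a i" by (rule mod_pred_succ[OF W_mem[OF a i]])
    then show "shift i (a(i := (a i + (q i - 1)) mod q i)) = a" by (simp add: shift_def)
  qed
  have upd: "n(i := v) \<in> W" if "n \<in> W" "v < q i" for n v
    unfolding Wset_def
  proof (rule PiE_I)
    fix x assume x: "x \<in> {..<d}" then show "(n(i := v)) x \<in> {..<q x}"
      using that(2) W_mem[OF that(1), of x] by (cases "x = i") auto
  next
    fix x assume x: "x \<notin> {..<d}"
    have "n x = undefined" using that(1) x unfolding Wset_def by (rule PiE_arb)
    then show "(n(i := v)) x = undefined" using x i by auto
  qed
  show "shift i ` W \<subseteq> W" using upd qi unfolding shift_def by auto
  show "(\<lambda>n. n(i := (n i + (q i - 1)) mod q i)) ` W \<subseteq> W" using upd qi by auto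
qed

lemma sig_G: "i < d \<Longrightarrow> sig i G = G"
proof -
  assume i: "i < d"
  have "sig i G = (\<Prod>n\<in>W. lin (shift i n))" by (simp add: G_def sig_prod sig_lin i)
  also have "\<dots> = G" unfolding G_def using prod.reindex_bij_betw[OF shift_bij[OF i], of lin] by simp
  finally show ?thesis .
qed

lemma lookup_sig: "Poly_Mapping.lookup (sig i p) m = inverse (rho q i 1) ^ Poly_Mapping.lookup m i * Poly_Mapping.lookup p m"
  unfolding sig_def using lookup_cmap_inj[of "\<lambda>m. m" m p] by simp

lemma G_nz: "G \<noteq> 0"
  unfolding G_def using finite_W lin_nz by simp

lemma G_keys_dvd: assumes "m \<in> Poly_Mapping.keys G" "i < d" shows "q i dvd Poly_Mapping.lookup m i"
proof -
  have qi: "q i > 0" using qpos assms by auto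
  have "Poly_Mapping.lookup G m = inverse (rho q i 1) ^ Poly_Mapping.lookup m i * Poly_Mapping.lookup G m"
    using lookup_sig[of i G m] sig_G[OF assms(2)] by simp
  moreover have "Poly_Mapping.lookup G m \<noteq> 0" using assms by (simp add: in_keys_iff)
  ultimately have "inverse (rho q i 1) ^ Poly_Mapping.lookup m i = 1" by simp
  then have "rho q i (1 * Poly_Mapping.lookup m i) = 1" by (simp add: rho_pow power_inverse)
  then show ?thesis using rho_one_iff[of q i, OF qi] by simp
qed

lemma keys_prod_lin:
  "finite T \<Longrightarrow> m \<in> Poly_Mapping.keys (\<Prod>n\<in>T. lin n) \<Longrightarrow>
     Poly_Mapping.keys m \<subseteq> {..<d} \<and> (\<forall>i. Poly_Mapping.lookup m i \<le> card T)"
proof (induction T arbitrary: m rule: finite_induct)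
  case empty then show ?case by simp
next
  case (insert t T)
  then have "m \<in> Poly_Mapping.keys (lin t * (\<Prod>n\<in>T. lin n))" by simp
  then obtain a b where ab: "m = a + b" "a \<in> Poly_Mapping.keys (lin t)" "b \<in> Poly_Mapping.keys (\<Prod>n\<in>T. lin n)"
    using keys_mult by blast
  obtain j where j: "a = Poly_Mapping.single j (Suc 0)" "j < d" using ab(2) keys_lin by blast
  have b: "Poly_Mapping.keys b \<subseteq> {..<d}" "\<forall>i. Poly_Mapping.lookup b i \<le> card T" using insert ab by auto
  have "Poly_Mapping.keys m \<subseteq> {..<d}" using ab(1) keys_add[of a b] b j by auto
  moreover have "Poly_Mapping.lookup m i \<le> card (insert t T)" for i
  proof -
    have "Poly_Mapping.lookup a i \<le> 1" using j by (simp add: lookup_single when_def)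
    moreover have "Poly_Mapping.lookup b i \<le> card T" using b(2) by blast
    ultimately show ?thesis using ab(1) insert(1,2) by (simp add: lookup_add)
  qed
  ultimately show ?case by blast
qed

lemma card_W: "card W = Qprod d q"
  by (simp add: Wset_def card_PiE Qprod_def)

lemma Q_pos: "Qprod d q > 0"
  using qpos by (simp add: Qprod_def)

lemma deg_one: "deg i 1 = 0" by (simp add: deg_def)

lemma deg_prod_lin: assumes i: "i < d" shows "finite T \<Longrightarrow> deg i (\<Prod>n\<in>T. lin n) = card T"
proof (induction T rule: finite_induct)
  case empty then show ?case by (simp add: deg_one)
next
  case (insert t T)
  have P: "(\<Prod>n\<in>T. lin n) \<noteq> 0" using insert(1) lin_nz by simp
  have "deg i (\<Prod>n\<in>insert t T. lin n) = deg i (lin t * (\<Prod>n\<in>T. lin n))" using insert(1,2) by simp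
  also have "\<dots> = deg i (lin t) + deg i (\<Prod>n\<in>T. lin n)" by (rule deg_mult[OF lin_nz P])
  also have "\<dots> = 1 + card T" using insert(3) deg_lin[of i t] i by simp
  finally show ?case using insert(1,2) by simp
qed

lemma deg_Const: "c \<noteq> 0 \<Longrightarrow> deg i (Const c) = 0"
  by (simp add: deg_def Const_def)

definition qq :: "nat \<Rightarrow> nat" where "qq i = (if i < d then q i else 1)"
lemma qq_pos: "qq i > 0" using qpos by (simp add: qq_def)

definition scale :: "mono \<Rightarrow> mono" where "scale m = Poly_Mapping.mapp (\<lambda>i k. qq i * k) m"
definition cmpr :: "mono \<Rightarrow> mono" where "cmpr m = Poly_Mapping.mapp (\<lambda>i k. k div qq i) m"

lemma lookup_scale: "Poly_Mapping.lookup (scale m) i = qq i * Poly_Mapping.lookup m i"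
  by (simp add: scale_def lookup_mapp when_def in_keys_iff)

lemma lookup_cmpr: "Poly_Mapping.lookup (cmpr m) i = Poly_Mapping.lookup m i div qq i"
  by (simp add: cmpr_def lookup_mapp when_def in_keys_iff)

lemma scale_add: "scale (m + m') = scale m + scale m'"
  by (rule poly_mapping_eqI) (simp add: lookup_scale lookup_add distrib_left)

lemma scale_inj: "inj scale"
proof (rule injI)
  fix m m' assume "scale m = scale m'"
  then have "qq i * Poly_Mapping.lookup m i = qq i * Poly_Mapping.lookup m' i" for i
    by (metis lookup_scale)
  then have "Poly_Mapping.lookup m i = Poly_Mapping.lookup m' i" for i using qq_pos[of i] by (metis mult_cancel_left not_gr0)
  then show "m = m'" by (intro poly_mapping_eqI) simp
qed

lemma scale_zero [simp]: "scale 0 = 0" by (rule poly_mapping_eqI) (simp add: lookup_scale)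

lemma scale_zero_iff: "scale m = 0 \<longleftrightarrow> m = 0"
proof
  assume "scale m = 0"
  then have "scale m = scale 0" by simp
  with scale_inj show "m = 0" by (rule injD)
qed simp

definition E :: "mpoly \<Rightarrow> mpoly" where "E p = cmap scale (\<lambda>_. 1) p"

lemma E_mult: "E (a * b) = E a * E b"
  unfolding E_def by (rule cmap_mult) (simp add: scale_add)

lemma E_Const: "E (Const c) = Const c"
  using scale_zero_iff by (simp add: E_def Const_def)

lemma lookup_E: "Poly_Mapping.lookup (E p) (scale m) = Poly_Mapping.lookup p m"
proof -
  have "inj_on scale (insert m (Poly_Mapping.keys p))" using scale_inj by (rule inj_on_subset) simp
  then show ?thesis unfolding E_def using lookup_cmap_inj[of scale m p "\<lambda>_. 1"] by simp
qed

lemma E_Const_inv: assumes "E a = Const c" shows "a = Const c"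
proof (rule poly_mapping_eqI)
  fix m
  have "Poly_Mapping.lookup a m = Poly_Mapping.lookup (Const c) (scale m)" using lookup_E[of a m] assms by simp
  also have "\<dots> = Poly_Mapping.lookup (Const c) m"
  proof -
    have "(0 = scale m) = (0 = m)" using scale_zero_iff by auto
    then show ?thesis by (simp add: Const_def lookup_single when_def)
  qed
  finally show "Poly_Mapping.lookup a m = Poly_Mapping.lookup (Const c) m" .
qed

lemma sig_E: assumes i: "i < d" shows "sig i (E a) = E a"
proof -
  have qi: "q i > 0" using qpos i by auto
  have "sig i (E a) = cmap scale (\<lambda>m. inverse (rho q i 1) ^ Poly_Mapping.lookup (scale m) i * 1) a"
    by (simp add: sig_def E_def cmap_cmap)
  also have "\<dots> = E a" unfolding E_def
  proof (rule cmap_cong)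
    fix m
    have r: "rho q i (1 * (q i * Poly_Mapping.lookup m i)) = 1"
      using rho_one_iff[of q i "1 * (q i * Poly_Mapping.lookup m i)", OF qi] by simp
    have "inverse (rho q i 1) ^ Poly_Mapping.lookup (scale m) i = inverse (rho q i 1 ^ (q i * Poly_Mapping.lookup m i))"
      using i by (simp add: lookup_scale qq_def power_inverse)
    also have "\<dots> = 1" using r by (simp only: rho_pow) simp
    finally show "scale m = scale m \<and> inverse (rho q i 1) ^ Poly_Mapping.lookup (scale m) i * 1 = 1"
      by simp
  qed
  finally show ?thesis .
qed

definition gpol :: mpoly where "gpol = cmap cmpr (\<lambda>_. 1) G"

lemma E_gpol: "E gpol = G"
proof -
  have "E gpol = cmap (\<lambda>m. scale (cmpr m)) (\<lambda>m. 1) G" by (simp add: E_def gpol_def cmap_cmap)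
  also have "\<dots> = G"
  proof (rule cmap_id)
    fix m assume m: "m \<in> Poly_Mapping.keys G"
    have "scale (cmpr m) = m"
    proof (rule poly_mapping_eqI)
      fix i
      show "Poly_Mapping.lookup (scale (cmpr m)) i = Poly_Mapping.lookup m i"
        using G_keys_dvd[OF m] by (cases "i < d") (simp_all add: lookup_scale lookup_cmpr qq_def)
    qed
    then show "scale (cmpr m) = m \<and> 1 = 1" by simp
  qed
  finally show ?thesis .
qed

end



context Setup begin

lemma closure:
  assumes SW: "S \<subseteq> W" and inv: "\<And>i. i < d \<Longrightarrow> shift i ` S \<subseteq> S" and n: "n \<in> S"
  shows "W \<subseteq> S"
proof -
  have step1: "n(i := (n i + t) mod q i) \<in> S" if "n \<in> S" "i < d" for n i t
  proof (induction t)
    case 0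
    have "n i < q i" using W_mem that SW by blast
    then show ?case using that by simp
  next
    case (Suc t)
    have "shift i (n(i := (n i + t) mod q i)) \<in> S" using Suc inv[OF that(2)] by blast
    moreover have "shift i (n(i := (n i + t) mod q i)) = n(i := (n i + Suc t) mod q i)"
      by (simp add: shift_def mod_Suc_eq)
    ultimately show ?case by (metis add_Suc_right)
  qed
  have step1': "n(i := k) \<in> S" if "n \<in> S" "i < d" "k < q i" for n i k
  proof -
    have ni: "n i < q i" using W_mem that SW by blast
    have "(n i + (k + q i - n i)) mod q i = k" using ni that(3) by simp
    then show ?thesis using step1[OF that(1,2), of "k + q i - n i"] by simp
  qed
  show "W \<subseteq> S"
  proof
    fix m assume m: "m \<in> W"
    define mix where "mix j = (\<lambda>x. if x < j then m x else n x)" for j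
    have "mix j \<in> S" if "j \<le> d" for j
      using that
    proof (induction j)
      case 0 then show ?case using n by (simp add: mix_def)
    next
      case (Suc j)
      have "mix (Suc j) = (mix j)(j := m j)" by (rule ext) (simp add: mix_def)
      moreover have "m j < q j" using W_mem m Suc by auto
      moreover have "(mix j)(j := m j) \<in> S" using step1'[of "mix j" j "m j"] Suc calculation(2) by simp
      ultimately show ?case by metis
    qed
    moreover have "mix d = m"
    proof (rule ext)
      fix x
      show "mix d x = m x"
      proof (cases "x < d")
        case False
        have "n x = undefined" using n SW False unfolding Wset_def by (intro PiE_arb[of n "{..<d}"]) auto
        moreover have "m x = undefined" using m False unfolding Wset_def by (intro PiE_arb[of m "{..<d}"]) auto
        ultimately show ?thesis using False by (simp add: mix_def)
      qed (simp add: mix_def)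
    qed
    ultimately show "m \<in> S" by auto
  qed
qed

lemma E_zero: "E 0 = 0" by (simp add: E_def)

lemma unit_Const: "c \<noteq> 0 \<Longrightarrow> Const c dvd 1"
  unfolding is_unit_iff_const Const_def by blast

lemma irreducible_gpol: "irreducible gpol"
proof (rule irreducibleI)
  show gnz: "gpol \<noteq> 0" using E_gpol G_nz E_zero by auto
  show "\<not> gpol dvd 1"
  proof
    assume "gpol dvd 1"
    then obtain c where c: "c \<noteq> 0" "gpol = Const c" using is_unit_iff_const Const_def by metis
    then have "G = Const c" using E_gpol E_Const by simp
    then have "deg 0 G = 0" using deg_Const[OF c(1)] by simp
    moreover have "deg 0 G = card W" unfolding G_def using deg_prod_lin[of 0 W] finite_W d2 by simp
    ultimately show False using card_W Q_pos by simp
  qed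
  fix a b assume ab: "gpol = a * b"
  have Gab: "E a * E b = (\<Prod>n\<in>W. lin n)" using E_gpol ab E_mult G_def by simp
  obtain S c where S: "S \<subseteq> W" "c \<noteq> 0" "E a = Const c * (\<Prod>n\<in>S. lin n)"
    using factor[OF finite_W Gab] by blast
  have fS: "finite S" using S finite_W finite_subset by blast
  have inv: "shift i ` S \<subseteq> S" if i: "i < d" for i
  proof -
    have injS: "inj_on (shift i) S" using shift_bij[OF i] S(1) bij_betw_imp_inj_on inj_on_subset by blast
    have "Const c * (\<Prod>n\<in>S. lin n) = sig i (E a)" using sig_E[OF i, of a] unfolding S(3) by simp
    also have "\<dots> = Const c * (\<Prod>n\<in>S. lin (shift i n))"
      using S(1) by (simp add: S(3) sig_mult sig_Const sig_prod sig_lin[OF i] subsetD cong: prod.cong)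
    also have "(\<Prod>n\<in>S. lin (shift i n)) = (\<Prod>n\<in>shift i ` S. lin n)"
      using prod.reindex[OF injS, of lin] by simp
    finally have eq: "Const c * (\<Prod>n\<in>S. lin n) = Const c * (\<Prod>n\<in>shift i ` S. lin n)" .
    have "shift i ` S \<subseteq> W" using shift_bij[OF i] S(1) bij_betw_imp_surj_on by blast
    then show ?thesis using unique_sub[OF _ S(1) S(2) eq[symmetric]] by blast
  qed
  show "a dvd 1 \<or> b dvd 1"
  proof (cases "S = {}")
    case True
    then have "E a = Const c" using S by simp
    then have "a = Const c" by (rule E_Const_inv)
    then show ?thesis using unit_Const S(2) by simp
  next
    case False
    then obtain n where "n \<in> S" by auto
    then have "S = W" using closure[OF S(1) inv] S(1) by blast
    then have "E a = Const c * G" using S G_def by simp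
    then have "G * (Const c * E b) = G * 1" using Gab G_def by (simp add: mult_ac)
    then have "Const c * E b = 1" using G_nz by simp
    then obtain c' where c': "E b = Poly_Mapping.single 0 c'" "c' \<noteq> 0"
      using unit_const[of "E b" "Const c"] by (metis mult.commute)
    then have "b = Const c'" using E_Const_inv Const_def by metis
    then show ?thesis using unit_Const c' by simp
  qed
qed

end



definition lep :: "mono \<Rightarrow> mono \<Rightarrow> bool" where
  "lep m N \<longleftrightarrow> (\<forall>i. Poly_Mapping.lookup m i \<le> Poly_Mapping.lookup N i)"

definition rev :: "mono \<Rightarrow> mpoly \<Rightarrow> mpoly" where "rev N p = cmap (\<lambda>m. N - m) (\<lambda>_. 1) p"

lemma lookup_minus_mono: "Poly_Mapping.lookup ((N::mono) - m) i = Poly_Mapping.lookup N i - Poly_Mapping.lookup m i"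
  by (simp add: lookup_minus)

lemma rev_rev: assumes "\<And>m. m \<in> Poly_Mapping.keys p \<Longrightarrow> lep m N" shows "rev N (rev N p) = p"
  unfolding rev_def cmap_cmap
proof (rule cmap_id)
  fix m assume "m \<in> Poly_Mapping.keys p"
  then have "lep m N" by (rule assms)
  then have "N - (N - m) = m" by (intro poly_mapping_eqI) (simp add: lookup_minus_mono lep_def)
  then show "N - (N - m) = m \<and> 1 * 1 = (1::complex)" by simp
qed

lemma rev_mult:
  assumes "\<And>m. m \<in> Poly_Mapping.keys a \<Longrightarrow> lep m A" "\<And>m. m \<in> Poly_Mapping.keys b \<Longrightarrow> lep m B"
  shows "rev (A + B) (a * b) = rev A a * rev B b"
  unfolding rev_def
proof (rule cmap_mult)
  fix m m' assume "m \<in> Poly_Mapping.keys a" "m' \<in> Poly_Mapping.keys b"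
  then have "lep m A" "lep m' B" using assms by auto
  then have "A + B - (m + m') = (A - m) + (B - m')"
    by (intro poly_mapping_eqI) (simp add: lookup_minus_mono lookup_add lep_def add_diff_add)
  then show "A + B - (m + m') = A - m + (B - m') \<and> (1::complex) = 1 * 1" by simp
qed

lemma rev_single: "rev N (Poly_Mapping.single m c) = Poly_Mapping.single (N - m) c"
  by (simp add: rev_def)

lemma keys_rev: "Poly_Mapping.keys (rev N p) \<subseteq> (\<lambda>m. N - m) ` Poly_Mapping.keys p"
  unfolding rev_def by (rule keys_cmap)

lemma lookup_rev: assumes "\<And>m. m \<in> Poly_Mapping.keys p \<Longrightarrow> lep m N" "lep m N"
  shows "Poly_Mapping.lookup (rev N p) (N - m) = Poly_Mapping.lookup p m"
proof -
  have "inj_on (\<lambda>m. N - m) (insert m (Poly_Mapping.keys p))"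
  proof (rule inj_onI)
    fix x y assume xy: "x \<in> insert m (Poly_Mapping.keys p)" "y \<in> insert m (Poly_Mapping.keys p)" "N - x = N - y"
    have "lep x N" "lep y N" using xy assms by auto
    then show "x = y" using xy(3)
      by (intro poly_mapping_eqI) (metis diff_diff_cancel lep_def lookup_minus_mono)
  qed
  then show ?thesis unfolding rev_def using lookup_cmap_inj[of "\<lambda>m. N - m" m p "\<lambda>_. 1"] by simp
qed

lemma prod_single_gen: "(\<Prod>n\<in>T. Poly_Mapping.single (t n) (c n) :: mpoly) = Poly_Mapping.single (\<Sum>n\<in>T. t n) (\<Prod>n\<in>T. c n)"
  by (induction T rule: infinite_finite_induct) (simp_all add: mult_single)

lemma keys_add_nat: "Poly_Mapping.keys ((m::mono) + m') = Poly_Mapping.keys m \<union> Poly_Mapping.keys m'"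
  by (auto simp: in_keys_iff lookup_add)

context Setup begin

definition Qn where "Qn = Qprod d q"

definition Nv :: mono where "Nv = (\<Sum>i<d. Poly_Mapping.single i (Qn div q i))"

lemma lookup_Nv: "Poly_Mapping.lookup Nv i = (if i < d then Qn div q i else 0)"
  by (simp add: Nv_def lookup_sum lookup_single when_def)

lemma q_dvd_Qn: "i < d \<Longrightarrow> q i dvd Qn"
  by (simp add: Qn_def Qprod_def dvd_prodI)

lemma Nv_pos: "i < d \<Longrightarrow> Poly_Mapping.lookup Nv i > 0"
proof -
  assume i: "i < d"
  have "q i \<le> Qn" using q_dvd_Qn[OF i] Q_pos by (intro dvd_imp_le) (auto simp: Qn_def)
  then show ?thesis using i qpos by (simp add: lookup_Nv div_greater_zero_iff)
qed

definition h1 :: mpoly where "h1 = rev Nv gpol"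

lemma keys_gpol: assumes "m \<in> Poly_Mapping.keys gpol" shows "lep m Nv" "Poly_Mapping.keys m \<subseteq> {..<d}"
proof -
  obtain m' where m': "m' \<in> Poly_Mapping.keys G" "m = cmpr m'"
    using assms keys_cmap[of cmpr "\<lambda>_. 1" G] unfolding gpol_def by auto
  have K: "Poly_Mapping.keys m' \<subseteq> {..<d}" "\<forall>i. Poly_Mapping.lookup m' i \<le> card W"
    using keys_prod_lin[OF finite_W] m'(1) G_def by auto
  have z: "Poly_Mapping.lookup m' i = 0" if "\<not> i < d" for i using K(1) that by (auto simp: in_keys_iff)
  show "lep m Nv" unfolding lep_def
  proof
    fix i show "Poly_Mapping.lookup m i \<le> Poly_Mapping.lookup Nv i"
      using K(2) z[of i] card_W by (cases "i < d") (auto simp: m'(2) lookup_cmpr lookup_Nv qq_def Qn_def intro: div_le_mono)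
  qed
  show "Poly_Mapping.keys m \<subseteq> {..<d}"
  proof
    fix x assume "x \<in> Poly_Mapping.keys m"
    then have "Poly_Mapping.lookup m' x div qq x \<noteq> 0" by (simp add: m'(2) lookup_cmpr in_keys_iff)
    then show "x \<in> {..<d}" using z[of x] by (cases "x < d") auto
  qed
qed

definition pii :: "nat \<Rightarrow> mpoly \<Rightarrow> mpoly" where
  "pii i p = cmap (\<lambda>m. m) (\<lambda>m. if Poly_Mapping.keys m \<subseteq> {i} then 1 else 0) p"

lemma pii_mult: "pii i (a * b) = pii i a * pii i b"
  unfolding pii_def by (rule cmap_mult) (simp add: keys_add_nat)

lemma pii_prod: "pii i (\<Prod>n\<in>T. P n) = (\<Prod>n\<in>T. pii i (P n))"
proof (induction T rule: infinite_finite_induct)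
  case (infinite A) then show ?case unfolding pii_def by (simp add: cmap_one)
next
  case empty then show ?case unfolding pii_def by (simp add: cmap_one)
next
  case (insert x F) then show ?case by (simp add: pii_mult)
qed

lemma pii_lin: "i < d \<Longrightarrow> pii i (lin n) = Poly_Mapping.single (Poly_Mapping.single i 1) (inverse (rho q i (n i)))"
proof -
  assume i: "i < d"
  have "pii i (lin n) = (\<Sum>j<d. Poly_Mapping.single (Poly_Mapping.single j 1)
      ((if Poly_Mapping.keys (Poly_Mapping.single j (1::nat)) \<subseteq> {i} then 1 else 0) * inverse (rho q j (n j))))"
    by (simp add: pii_def lin_def linf_def cmap_sum)
  also have "\<dots> = (\<Sum>j<d. (Poly_Mapping.single (Poly_Mapping.single j 1) (inverse (rho q j (n j))) when j = i))"
    by (intro sum.cong refl) (auto simp: when_def)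
  also have "\<dots> = Poly_Mapping.single (Poly_Mapping.single i 1) (inverse (rho q i (n i)))"
    using i by (simp add: when_def sum.delta)
  finally show ?thesis .
qed

lemma lookup_pii: "Poly_Mapping.lookup (pii i p) m = (if Poly_Mapping.keys m \<subseteq> {i} then 1 else 0) * Poly_Mapping.lookup p m"
  unfolding pii_def using lookup_cmap_inj[of "\<lambda>m. m" m p] by simp

lemma G_key: assumes i: "i < d" shows "Poly_Mapping.single i Qn \<in> Poly_Mapping.keys G"
proof -
  have "pii i G = (\<Prod>n\<in>W. Poly_Mapping.single (Poly_Mapping.single i 1) (inverse (rho q i (n i))))"
    by (simp add: G_def pii_prod pii_lin i)
  also have "\<dots> = Poly_Mapping.single (\<Sum>n\<in>W. Poly_Mapping.single i 1) (\<Prod>n\<in>W. inverse (rho q i (n i)))"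
    by (rule prod_single_gen)
  also have "(\<Sum>n\<in>W. Poly_Mapping.single i (1::nat)) = Poly_Mapping.single i Qn"
  proof -
    have "(\<Sum>n\<in>T. Poly_Mapping.single i (f n)) = Poly_Mapping.single i (\<Sum>n\<in>T. f n :: nat)" for T :: "(nat \<Rightarrow> nat) set" and f
      by (induction T rule: infinite_finite_induct) (simp_all add: single_add)
    from this[of "\<lambda>_. 1" W] show ?thesis using card_W Qn_def by simp
  qed
  finally have "Poly_Mapping.lookup (pii i G) (Poly_Mapping.single i Qn) = (\<Prod>n\<in>W. inverse (rho q i (n i)))" by simp
  moreover have "(\<Prod>n\<in>W. inverse (rho q i (n i))) \<noteq> 0" using finite_W by simp
  moreover have "Poly_Mapping.keys (Poly_Mapping.single i Qn) \<subseteq> {i}" by simp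
  ultimately show ?thesis by (simp add: lookup_pii in_keys_iff)
qed

definition Ki where "Ki i = Poly_Mapping.single i (Qn div q i)"

lemma gpol_key: assumes i: "i < d" shows "Ki i \<in> Poly_Mapping.keys gpol"
proof -
  have "scale (Ki i) = Poly_Mapping.single i Qn"
  proof (rule poly_mapping_eqI)
    fix k show "Poly_Mapping.lookup (scale (Ki i)) k = Poly_Mapping.lookup (Poly_Mapping.single i Qn) k"
      by (cases "k = i") (use i q_dvd_Qn[OF i] in \<open>simp_all add: Ki_def lookup_scale lookup_single when_def qq_def\<close>)
  qed
  then have "Poly_Mapping.lookup gpol (Ki i) = Poly_Mapping.lookup G (Poly_Mapping.single i Qn)"
    using lookup_E[of gpol "Ki i"] E_gpol by simp
  then show ?thesis using G_key[OF i] by (simp add: in_keys_iff)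
qed

end



context Setup begin

lemma gpol_lep: "m \<in> Poly_Mapping.keys gpol \<Longrightarrow> lep m Nv" using keys_gpol by blast

lemma keys_h1: assumes "k \<in> Poly_Mapping.keys h1"
  shows "lep k Nv" "Poly_Mapping.keys k \<subseteq> {..<d}"
proof -
  obtain m where m: "m \<in> Poly_Mapping.keys gpol" "k = Nv - m" using assms keys_rev[of Nv gpol] h1_def by auto
  show "lep k Nv" by (simp add: m(2) lep_def lookup_minus_mono)
  show "Poly_Mapping.keys k \<subseteq> {..<d}"
  proof
    fix x assume "x \<in> Poly_Mapping.keys k"
    then have "Poly_Mapping.lookup Nv x \<noteq> 0" by (simp add: m(2) lookup_minus_mono in_keys_iff)
    then show "x \<in> {..<d}" by (simp add: lookup_Nv split: if_splits)
  qed
qed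

lemma lookup_NvKi: "j < d \<Longrightarrow> Poly_Mapping.lookup (Nv - Ki j) i = (if i = j then 0 else Poly_Mapping.lookup Nv i)"
  by (simp add: lookup_minus_mono Ki_def lookup_single when_def lookup_Nv)

lemma h1_key: assumes j: "j < d" shows "Nv - Ki j \<in> Poly_Mapping.keys h1"
proof -
  have "Poly_Mapping.lookup h1 (Nv - Ki j) = Poly_Mapping.lookup gpol (Ki j)"
    unfolding h1_def by (rule lookup_rev) (use gpol_lep gpol_key[OF j] in auto)
  then show ?thesis using gpol_key[OF j] by (simp add: in_keys_iff)
qed

lemma h1_nz: "h1 \<noteq> 0" using h1_key[of 0] d2 by auto

lemma deg_h1: "deg i h1 = Poly_Mapping.lookup Nv i"
proof -
  have le: "Poly_Mapping.lookup k i \<le> Poly_Mapping.lookup Nv i" if "k \<in> Poly_Mapping.keys h1" for k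
    using keys_h1(1)[OF that] by (simp add: lep_def)
  show ?thesis
  proof (cases "i < d")
    case True
    define j where "j = (if i = 0 then 1 else 0::nat)"
    have j: "j < d" "j \<noteq> i" using d2 by (auto simp: j_def)
    have "Poly_Mapping.lookup (Nv - Ki j) i = Poly_Mapping.lookup Nv i" using j by (simp add: lookup_NvKi)
    then show ?thesis unfolding deg_def using h1_key[OF j(1)] le
      by (intro Max_eqI) (auto, metis image_eqI)
  next
    case False
    then have "Poly_Mapping.lookup Nv i = 0" by (simp add: lookup_Nv)
    then show ?thesis unfolding deg_def using h1_key[of 0] d2 le
      by (intro Max_eqI) force+
  qed
qed

lemma rev_h1: "rev Nv h1 = gpol"
  unfolding h1_def by (rule rev_rev) (rule gpol_lep)

definition vdeg :: "mpoly \<Rightarrow> mono" where "vdeg p = (\<Sum>i<d. Poly_Mapping.single i (deg i p))"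

lemma lookup_vdeg: "Poly_Mapping.lookup (vdeg p) i = (if i < d then deg i p else 0)"
  by (simp add: vdeg_def lookup_sum lookup_single when_def)

lemma factor_props:
  assumes ab: "h1 = a * b"
  shows "a \<noteq> 0" "\<And>i. \<not> i < d \<Longrightarrow> deg i a = 0" "\<And>m. m \<in> Poly_Mapping.keys a \<Longrightarrow> lep m (vdeg a)"
proof -
  show anz: "a \<noteq> 0" using ab h1_nz by auto
  have bnz: "b \<noteq> 0" using ab h1_nz by auto
  show z: "deg i a = 0" if "\<not> i < d" for i
    using deg_mult[OF anz bnz, of i] ab deg_h1[of i] that by (simp add: lookup_Nv)
  fix m assume m: "m \<in> Poly_Mapping.keys a"
  show "lep m (vdeg a)" unfolding lep_def
  proof
    fix i show "Poly_Mapping.lookup m i \<le> Poly_Mapping.lookup (vdeg a) i"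
      using deg_ge[OF m, of i] z[of i] by (cases "i < d") (simp_all add: lookup_vdeg)
  qed
qed

lemma aux_unit:
  assumes ab: "h1 = a * b" and u: "rev (vdeg a) a dvd 1"
  shows "a dvd 1"
proof -
  obtain c where c: "c \<noteq> 0" "rev (vdeg a) a = Poly_Mapping.single 0 c" using u is_unit_iff_const by blast
  have "a = rev (vdeg a) (rev (vdeg a) a)" using factor_props(3)[OF ab] by (simp add: rev_rev)
  also have "\<dots> = Poly_Mapping.single (vdeg a) c" by (simp add: c rev_single)
  finally have a: "a = Poly_Mapping.single (vdeg a) c" .
  have "Poly_Mapping.lookup (vdeg a) i = 0" for i
  proof (cases "i < d")
    case True
    have "Nv - Ki i \<in> Poly_Mapping.keys (Poly_Mapping.single (vdeg a) c * b)" using h1_key[OF True] ab a by simp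
    then obtain x y where xy: "Nv - Ki i = x + y" "x \<in> Poly_Mapping.keys (Poly_Mapping.single (vdeg a) c)"
      using keys_mult by blast
    then have "x = vdeg a" using c by simp
    then have "Poly_Mapping.lookup (vdeg a) i \<le> Poly_Mapping.lookup (Nv - Ki i) i" using xy(1) by (simp add: lookup_add)
    then show ?thesis using True by (simp add: lookup_NvKi)
  qed (simp add: lookup_vdeg)
  then have "vdeg a = 0" by (intro poly_mapping_eqI) simp
  then show ?thesis using a c is_unit_iff_const by auto
qed

lemma irreducible_h1: "irreducible h1"
proof (rule irreducibleI)
  show "h1 \<noteq> 0" by (rule h1_nz)
  show "\<not> h1 dvd 1"
  proof
    assume "h1 dvd 1"
    then obtain c where "h1 = Poly_Mapping.single 0 c" using is_unit_iff_const by blast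
    moreover have "Nv - Ki 0 \<noteq> 0"
    proof
      assume "Nv - Ki 0 = 0"
      then have "Poly_Mapping.lookup (Nv - Ki 0) 1 = 0" by simp
      then show False using d2 Nv_pos[of 1] by (simp add: lookup_NvKi)
    qed
    ultimately show False using h1_key[of 0] d2 by (auto split: if_splits)
  qed
  fix a b assume ab: "h1 = a * b"
  have ba: "h1 = b * a" using ab by (simp add: mult.commute)
  have anz: "a \<noteq> 0" and bnz: "b \<noteq> 0" using ab h1_nz by auto
  have sum: "vdeg a + vdeg b = Nv"
  proof (rule poly_mapping_eqI)
    fix i show "Poly_Mapping.lookup (vdeg a + vdeg b) i = Poly_Mapping.lookup Nv i"
      using deg_mult[OF anz bnz, of i] ab deg_h1[of i] by (simp add: lookup_add lookup_vdeg lookup_Nv)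
  qed
  have "gpol = rev (vdeg a + vdeg b) (a * b)" using rev_h1 ab sum by simp
  also have "\<dots> = rev (vdeg a) a * rev (vdeg b) b"
    by (rule rev_mult) (use factor_props(3)[OF ab] factor_props(3)[OF ba] in auto)
  finally have "rev (vdeg a) a dvd 1 \<or> rev (vdeg b) b dvd 1"
    using irreducible_gpol irreducibleD by blast
  then show "a dvd 1 \<or> b dvd 1" using aux_unit[OF ab] aux_unit[OF ba] by blast
qed

end



lemma evh_cong_vars:
  assumes "\<And>m. m \<in> Poly_Mapping.keys p \<Longrightarrow> Poly_Mapping.keys m \<subseteq> A" "\<And>i. i \<in> A \<Longrightarrow> x i = y i"
  shows "evh h x p = evh h y p"
  unfolding evh_def mon_def
  by (intro sum.cong refl arg_cong2[where f="(*)"] prod.cong) (metis assms subsetD)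

context Setup begin

lemma evh_E: "evh (\<lambda>c. c) u (E p) = evh (\<lambda>c. c) (\<lambda>i. u i ^ qq i) p"
proof -
  have "mon u (scale m) = mon (\<lambda>i. u i ^ qq i) m" for m
  proof -
    have "mon u (scale m) = (\<Prod>i\<in>Poly_Mapping.keys m. u i ^ Poly_Mapping.lookup (scale m) i)"
      by (rule mon_superset) (auto simp: in_keys_iff lookup_scale)
    also have "\<dots> = mon (\<lambda>i. u i ^ qq i) m" by (simp add: mon_def lookup_scale power_mult)
    finally show ?thesis .
  qed
  then show ?thesis unfolding E_def evh_cmap[OF ringhom_id] by (simp add: evh_def)
qed

lemma evh_G: "evh (\<lambda>c. c) u G = (\<Prod>n\<in>W. \<Sum>j<d. inverse (rho q j (n j)) * u j)"
  by (simp add: G_def evh_prod ringhom_id lin_def linf_def evh_sum evh_single mon_single1)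

lemma evh_rev:
  assumes "\<And>m. m \<in> Poly_Mapping.keys p \<Longrightarrow> lep m Nv"
    and x: "\<And>i. i < d \<Longrightarrow> x i \<noteq> 0"
  shows "evh (\<lambda>c. c) x (rev Nv p) = mon x Nv * evh (\<lambda>c. c) (\<lambda>i. inverse (x i)) p"
proof -
  have KN: "Poly_Mapping.keys Nv \<subseteq> {..<d}" by (auto simp: in_keys_iff lookup_Nv split: if_splits)
  have "mon x (Nv - m) = mon x Nv * mon (\<lambda>i. inverse (x i)) m" if m: "m \<in> Poly_Mapping.keys p" for m
  proof -
    have lm: "lep m Nv" using assms(1) m by blast
    have Km: "Poly_Mapping.keys m \<subseteq> {..<d}"
    proof
      fix i assume "i \<in> Poly_Mapping.keys m"
      then have "Poly_Mapping.lookup Nv i \<noteq> 0" using lm unfolding lep_def in_keys_iff by (metis le_zero_eq)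
      then show "i \<in> {..<d}" by (simp add: lookup_Nv split: if_splits)
    qed
    have K1: "Poly_Mapping.keys (Nv - m) \<subseteq> {..<d}" by (auto simp: in_keys_iff lookup_minus_mono lookup_Nv split: if_splits)
    have "mon x (Nv - m) = (\<Prod>i<d. x i ^ (Poly_Mapping.lookup Nv i - Poly_Mapping.lookup m i))"
      by (simp add: mon_superset[OF _ K1] lookup_minus_mono)
    also have "\<dots> = (\<Prod>i<d. x i ^ Poly_Mapping.lookup Nv i * inverse (x i) ^ Poly_Mapping.lookup m i)"
      using lm x by (intro prod.cong refl) (simp add: lep_def power_diff power_inverse divide_inverse)
    also have "\<dots> = mon x Nv * mon (\<lambda>i. inverse (x i)) m"
      by (simp add: prod.distrib mon_superset[OF _ KN] mon_superset[OF _ Km])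
    finally show ?thesis .
  qed
  then have "evh (\<lambda>c. c) x (rev Nv p) = (\<Sum>m\<in>Poly_Mapping.keys p. Poly_Mapping.lookup p m * (mon x Nv * mon (\<lambda>i. inverse (x i)) m))"
    unfolding rev_def evh_cmap[OF ringhom_id] by (intro sum.cong refl) simp
  then show ?thesis
    by (simp add: evh_def[of _ _ p] sum_distrib_left mult_ac)
qed

lemma mon_Nv: "mon (\<lambda>j. z j ^ q j) Nv = (\<Prod>j<d. z j ^ Qprod d q)"
proof -
  have KN: "Poly_Mapping.keys Nv \<subseteq> {..<d}" by (auto simp: in_keys_iff lookup_Nv split: if_splits)
  show ?thesis
  proof -
    have "mon (\<lambda>j. z j ^ q j) Nv = (\<Prod>j<d. (z j ^ q j) ^ Poly_Mapping.lookup Nv j)"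
      by (rule mon_superset[OF _ KN]) simp
    also have "\<dots> = (\<Prod>j<d. z j ^ Qprod d q)"
    proof (intro prod.cong refl)
      fix j assume "j \<in> {..<d}"
      then have "q j * (Qprod d q div q j) = Qprod d q" using q_dvd_Qn[of j] by (simp add: Qn_def)
      then show "(z j ^ q j) ^ Poly_Mapping.lookup Nv j = z j ^ Qprod d q"
        using \<open>j \<in> {..<d}\<close> by (simp add: lookup_Nv Qn_def flip: power_mult)
    qed
    finally show ?thesis .
  qed
qed

lemma eval_h1:
  assumes z: "\<forall>j<d. z j \<noteq> 0"
  shows "htilde1 d q z = mpoly_eval h1 (\<lambda>j. z j ^ q j)"
proof -
  let ?w = "\<lambda>j. z j ^ q j"
  let ?u = "\<lambda>j. inverse (z j)"
  have "mpoly_eval h1 ?w = mon ?w Nv * evh (\<lambda>c. c) (\<lambda>i. inverse (?w i)) gpol"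
    unfolding mpoly_eval_evh h1_def by (rule evh_rev) (use gpol_lep z in auto)
  also have "evh (\<lambda>c. c) (\<lambda>i. inverse (?w i)) gpol = evh (\<lambda>c. c) (\<lambda>i. ?u i ^ qq i) gpol"
    by (rule evh_cong_vars[where A="{..<d}"]) (use keys_gpol in \<open>auto simp: qq_def power_inverse\<close>)
  also have "\<dots> = evh (\<lambda>c. c) ?u G" using evh_E[of ?u gpol] E_gpol by simp
  also have "\<dots> = (\<Prod>n\<in>W. \<Sum>j<d. 1 / (rho q j (n j) * z j))"
    unfolding evh_G by (simp add: divide_inverse inverse_mult_distrib mult_ac)
  finally show ?thesis by (simp add: htilde1_def mon_Nv)
qed

end



context Setup begin

lemma htilde2_eq:
  assumes z: "\<forall>j<d. z j \<noteq> 0"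
  shows "htilde2 d q z = htilde1 d q (z(d-1 := inverse (z (d-1))))"
proof -
  define e where "e = d - 1"
  have de: "d = Suc e" using d2 by (simp add: e_def)
  have e_pos: "0 < q e" using qpos de by simp
  let ?z' = "z(e := inverse (z e))"
  let ?Q = "Qprod d q"
  define S where "S n = (\<Sum>j<e. 1 / (rho q j (n j) * z j))" for n
  define r where "r n = n(e := (q e - n e) mod q e)" for n
  have rr: "r (r n) = n" if "n \<in> W" for n
  proof -
    have ne: "n e < q e" using W_mem[OF that] de by simp
    have "(q e - (q e - n e) mod q e) mod q e = n e"
      using ne by (cases "n e = 0") (simp_all add: mod_if)
    then show ?thesis by (simp add: r_def)
  qed
  have rW: "r n \<in> W" if "n \<in> W" for n
    unfolding Wset_def
  proof (rule PiE_I)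
    fix x assume x: "x \<in> {..<d}" then show "r n x \<in> {..<q x}"
      using W_mem[OF that, of x] e_pos by (cases "x = e") (auto simp: r_def)
  next
    fix x assume x: "x \<notin> {..<d}"
    have "n x = undefined" using that x unfolding Wset_def by (rule PiE_arb)
    then show "r n x = undefined" using x de by (auto simp: r_def)
  qed
  have bij: "bij_betw r W W" by (rule bij_betw_byWitness[where f'=r]) (use rr rW in auto)
  have D: "{..<d} = insert e {..<e}" using de by auto
  have pe: "(\<Prod>j<e. ?z' j ^ ?Q) = (\<Prod>j<e. z j ^ ?Q)" by (intro prod.cong refl) auto
  have pre: "(\<Prod>j<d. ?z' j ^ ?Q) = (\<Prod>j<e. z j ^ ?Q) / z e ^ ?Q"
    unfolding D by (simp add: pe power_inverse divide_inverse mult.commute)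
  have fac: "(\<Sum>j<d. 1 / (rho q j (n j) * ?z' j)) = z e / rho q e (n e) + S n" for n
  proof -
    have "(\<Sum>j<e. 1 / (rho q j (n j) * ?z' j)) = S n" unfolding S_def by (intro sum.cong refl) auto
    then show ?thesis unfolding D by (simp add: divide_inverse mult.commute)
  qed
  have S_r: "S (r n) = S n" for n by (simp add: S_def r_def)
  have rho_r: "z e / rho q e (r n e) = rho q e (n e) * z e" if "n \<in> W" for n
  proof -
    have ne: "n e < q e" using W_mem[OF that] de by simp
    have "rho q e (r n e) * rho q e (n e) = rho q e ((q e - n e) + n e)"
      by (simp add: r_def rho_mod[of q e, OF e_pos] rho_mult)
    also have "\<dots> = 1" using ne rho_one_iff[of q e "q e", OF e_pos] by simp
    finally have "rho q e (r n e) * rho q e (n e) = 1" .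
    then show ?thesis by (simp add: field_simps)
  qed
  have "(\<Prod>n\<in>W. z e / rho q e (n e) + S n) = (\<Prod>n\<in>W. z e / rho q e (r n e) + S (r n))"
    using prod.reindex_bij_betw[OF bij, of "\<lambda>n. z e / rho q e (n e) + S n"] by simp
  also have "\<dots> = (\<Prod>n\<in>W. rho q e (n e) * z e + S n)"
    by (intro prod.cong refl) (simp add: S_r rho_r)
  finally have main: "(\<Prod>n\<in>W. z e / rho q e (n e) + S n) = (\<Prod>n\<in>W. rho q e (n e) * z e + S n)" .
  have "htilde1 d q ?z' = (\<Prod>j<e. z j ^ ?Q) / z e ^ ?Q * (\<Prod>n\<in>W. z e / rho q e (n e) + S n)"
    unfolding htilde1_def pre fac by simp
  also have "\<dots> = (\<Prod>j<e. z j ^ ?Q) / z e ^ ?Q * (\<Prod>n\<in>W. rho q e (n e) * z e + S n)"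
    by (simp only: main)
  also have "\<dots> = htilde2 d q z"
    unfolding htilde2_def e_def[symmetric] S_def by simp
  finally show ?thesis by (simp add: e_def)
qed

end

theorem mainTheorem7:
  fixes d :: nat and q :: "nat \<Rightarrow> nat"
  assumes "d \<ge> 2"
    and "\<forall>j<d. q j > 0"
    and "Gcd (q ` {..<d}) = 1"
  shows "\<exists>h1 h2 :: mpoly.
           mpoly_vars_below d h1 \<and> mpoly_vars_below d h2 \<and>
           (\<forall>z. (\<forall>j<d. z j \<noteq> 0) \<longrightarrow>
                htilde1 d q z = mpoly_eval h1 (\<lambda>j. z j ^ q j)) \<and>
           (\<forall>z. (\<forall>j<d. z j \<noteq> 0) \<longrightarrow>
                htilde2 d q z = mpoly_eval h2 (\<lambda>j. if j = d - 1 then inverse (z j ^ q j) else z j ^ q j)) \<and>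
           irreducible h1 \<and> irreducible h2"
proof -
  interpret Setup d q using assms by unfold_locales
  have vb: "mpoly_vars_below d h1" unfolding mpoly_vars_below_def using keys_h1(2) by blast
  have e2: "htilde2 d q z = mpoly_eval h1 (\<lambda>j. if j = d - 1 then inverse (z j ^ q j) else z j ^ q j)"
    if z: "\<forall>j<d. z j \<noteq> 0" for z
  proof -
    let ?z' = "z(d-1 := inverse (z (d-1)))"
    have z': "\<forall>j<d. ?z' j \<noteq> 0" using z by auto
    have "htilde2 d q z = htilde1 d q ?z'" by (rule htilde2_eq[OF z])
    also have "\<dots> = mpoly_eval h1 (\<lambda>j. ?z' j ^ q j)" by (rule eval_h1[OF z'])
    also have "(\<lambda>j. ?z' j ^ q j) = (\<lambda>j. if j = d - 1 then inverse (z j ^ q j) else z j ^ q j)"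
      by (rule ext) (simp add: power_inverse)
    finally show ?thesis .
  qed
  show ?thesis
    using vb eval_h1 e2 irreducible_h1 by blast
qed



end
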